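(* For a subset $\mathcal S$ of a $*$-algebra $\mathcal A$ the following are equivalent: (1) $\mathcal S=\mathcal I_{\mathrm{soft}}(\pi)$ for some finite-dimensional $*$-representation $\pi$ of $\mathcal A$; (2) $\mathcal S=\bigcup_{i=1}^k\widehat{I_i}$ for some $k\in\mathbb N$ and some real left ideals $I_1,\dots,I_k$ of $\mathcal A$ with $\dim(\mathcal A/I_i)<\infty$ for each $i$.
   Context: $\mathbb F\in\{\mathbb R,\mathbb C\}$. A $*$-algebra is a unital associative $\mathbb F$-algebra with involution. A left ideal $I$ is real if whenever $a_1,\dots,a_n\in\mathcal A$ and $\sum_j a_j^*a_j\in I+I^*$, every $a_j\in I$. A finite-dimensional $*$-representation $\pi$ is a unital $*$-homomorphism from $\mathcal A$ into the linear operators on a finite-dimensional inner product space $V_\pi$ over $\mathbb F$ (respecting adjoints). $\mathcal I_{\mathrm{soft}}(\pi)=\{a\in\mathcal A:\det\pi(a)=0\}$, i.e. the set of $a$ with $\pi(a)$ not invertible. For a left ideal $I$, $\widehat I=\{p\in\mathcal A:\text{there exists } q\in\mathcal A\setminus I \text{ with } pq\in I\}$. *)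

theory Defs
  imports Main "Jordan_Normal_Form.Determinant" "Jordan_Normal_Form.Conjugate"
begin

text \<open>The scalar involution is conjugate (identity on real, cnj on complex).\<close>
definition star_algebra ::
  "('k::conjugatable_field \<Rightarrow> 'a::ring_1 \<Rightarrow> 'a) \<Rightarrow> ('a \<Rightarrow> 'a) \<Rightarrow> bool" where
  "star_algebra sc st \<longleftrightarrow>
     vector_space sc \<and>
     (\<forall>c x y. sc c (x * y) = sc c x * y \<and> sc c (x * y) = x * sc c y) \<and>
     (\<forall>x y. st (x + y) = st x + st y) \<and>
     (\<forall>c x. st (sc c x) = sc (conjugate c) (st x)) \<and>
     (\<forall>x y. st (x * y) = st y * st x) \<and>
     (\<forall>x. st (st x) = x)"

definition adjoint_mat :: "'k::conjugatable_field mat \<Rightarrow> 'k mat" where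
  "adjoint_mat A = mat (dim_col A) (dim_row A) (\<lambda>(i, j). conjugate (A $$ (j, i)))"

text \<open>A finite-dimensional *-representation, realised on 'k^n with the standard
  inner product (every finite-dimensional inner product space is isometric to one of these).\<close>
definition star_rep ::
  "('k::conjugatable_field \<Rightarrow> 'a::ring_1 \<Rightarrow> 'a) \<Rightarrow> ('a \<Rightarrow> 'a) \<Rightarrow> nat \<Rightarrow> ('a \<Rightarrow> 'k mat) \<Rightarrow> bool" where
  "star_rep sc st n \<pi> \<longleftrightarrow>
     (\<forall>a. \<pi> a \<in> carrier_mat n n) \<and>
     \<pi> 1 = 1\<^sub>m n \<and>
     (\<forall>a b. \<pi> (a + b) = \<pi> a + \<pi> b) \<and>
     (\<forall>a b. \<pi> (a * b) = \<pi> a * \<pi> b) \<and>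
     (\<forall>c a. \<pi> (sc c a) = c \<cdot>\<^sub>m \<pi> a) \<and>
     (\<forall>a. \<pi> (st a) = adjoint_mat (\<pi> a))"

definition I_soft :: "('a \<Rightarrow> 'k::comm_ring_1 mat) \<Rightarrow> 'a set" where
  "I_soft \<pi> = {a. det (\<pi> a) = 0}"

definition left_ideal :: "'a::ring_1 set \<Rightarrow> bool" where
  "left_ideal I \<longleftrightarrow> 0 \<in> I \<and> (\<forall>x\<in>I. \<forall>y\<in>I. x + y \<in> I) \<and> (\<forall>a. \<forall>x\<in>I. a * x \<in> I)"

definition real_left_ideal :: "('a::ring_1 \<Rightarrow> 'a) \<Rightarrow> 'a set \<Rightarrow> bool" where
  "real_left_ideal st I \<longleftrightarrow> left_ideal I \<and>
     (\<forall>as :: 'a list. (\<Sum>a\<leftarrow>as. st a * a) \<in> {x + st y | x y. x \<in> I \<and> y \<in> I} \<longrightarrow> set as \<subseteq> I)"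

definition fin_codim :: "('k::field \<Rightarrow> 'a::ring_1 \<Rightarrow> 'a) \<Rightarrow> 'a set \<Rightarrow> bool" where
  "fin_codim sc I \<longleftrightarrow> (\<exists>B. finite B \<and> (\<forall>x. \<exists>y\<in>module.span sc B. x - y \<in> I))"

definition hat :: "'a::ring_1 set \<Rightarrow> 'a set" where
  "hat I = {p. \<exists>q. q \<notin> I \<and> p * q \<in> I}"

end

theory Submission
  imports Defs "Jordan_Normal_Form.Schur_Decomposition"
begin

class rclike = conjugatable_field + real_normed_field +
  assumes conjugate_of_real': "conjugate (scaleR r 1 :: 'a) = scaleR r 1"
  and conjugate_mult_self': "conjugate (c::'a) * c = scaleR ((norm c)^2) 1"
  and conjugate_fixed': "conjugate (c::'a) = c \<Longrightarrow> \<exists>r. c = scaleR r 1"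

lemma conjugate_of_real: "conjugate (of_real r :: 'a::rclike) = of_real r"
  by (simp add: of_real_def conjugate_of_real')
lemma conjugate_mult_self: "conjugate (c::'a::rclike) * c = of_real ((norm c)^2)"
  by (simp add: of_real_def conjugate_mult_self')
lemma conjugate_fixed: "conjugate (c::'a::rclike) = c \<Longrightarrow> \<exists>r. c = of_real r"
  by (simp add: of_real_def conjugate_fixed')

instance real :: rclike
proof
  fix r :: real show "conjugate (r *\<^sub>R 1 :: real) = r *\<^sub>R 1" by simp
next
  fix c :: real show "conjugate c * c = (norm c)^2 *\<^sub>R 1" by (simp add: power2_eq_square)
next
  fix c :: real show "\<exists>r. c = r *\<^sub>R 1" by (rule exI[of _ c]) simp
qed


instance complex :: rclike
proof
  fix r :: real show "conjugate (r *\<^sub>R 1 :: complex) = r *\<^sub>R 1" by simp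
next
  fix c :: complex show "conjugate c * c = (norm c)^2 *\<^sub>R 1"
  proof -
    have "(norm c)^2 *\<^sub>R (1::complex) = complex_of_real ((norm c) ^ 2)" by (simp add: scaleR_conv_of_real)
    also have "\<dots> = c * cnj c" by (rule complex_norm_square)
    finally show ?thesis by (simp add: mult.commute)
  qed
next
  fix c :: complex assume "conjugate c = c"
  hence "c = Re c *\<^sub>R 1" by (simp add: complex_eq_iff)
  thus "\<exists>r. c = r *\<^sub>R 1" by blast
qed

lemma conjugate_one[simp]: "conjugate (1::'k::rclike) = 1"
  using conjugate_of_real[of 1, where 'a='k] by simp

lemma conjugate_inverse: "conjugate (inverse (c::'k::rclike)) = inverse (conjugate c)"
proof (cases "c = 0")
  case False
  have "conjugate c * conjugate (inverse c) = 1"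
    using False by (simp add: conjugate_dist_mul[symmetric])
  thus ?thesis by (rule inverse_unique[symmetric])
qed simp

lemma conjugate_divide: "conjugate ((a::'k::rclike) / b) = conjugate a / conjugate b"
  by (simp only: divide_inverse conjugate_dist_mul conjugate_inverse)

lemma conjugate_diff: "conjugate ((a::'k::rclike) - b) = conjugate a - conjugate b"
  by (simp only: diff_conv_add_uminus conjugate_dist_add conjugate_neg)

lemma conjugate_sum_rc: "conjugate (sum f A) = (\<Sum>x\<in>A. conjugate (f x :: 'k::rclike))"
  by (induct A rule: infinite_finite_induct) (auto simp: conjugate_dist_add)

lemma conjugate_numeral[simp]: "conjugate (numeral n :: 'k::rclike) = numeral n"
  using conjugate_of_real[of "numeral n", where 'a='k] by simp

locale salg =
  fixes sc :: "'k::rclike \<Rightarrow> 'a::ring_1 \<Rightarrow> 'a" and st :: "'a \<Rightarrow> 'a"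
  assumes sa: "star_algebra sc st"
begin

lemma vs: "vector_space sc" using sa unfolding star_algebra_def by blast

sublocale v: vector_space sc by (rule vs)

lemma sc_mult_left: "sc c x * y = sc c (x * y)"
proof -
  have "\<forall>c x y. sc c (x * y) = sc c x * y" using sa unfolding star_algebra_def by blast
  thus ?thesis by simp
qed
lemma sc_mult_right: "x * sc c y = sc c (x * y)"
proof -
  have "\<forall>c x y. sc c (x * y) = x * sc c y" using sa unfolding star_algebra_def by blast
  thus ?thesis by simp
qed
lemma st_add: "st (x + y) = st x + st y" using sa unfolding star_algebra_def by blast
lemma st_sc: "st (sc c x) = sc (conjugate c) (st x)" using sa unfolding star_algebra_def by blast
lemma st_mult: "st (x * y) = st y * st x" using sa unfolding star_algebra_def by blast
lemma st_st[simp]: "st (st x) = x" using sa unfolding star_algebra_def by blast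

lemma st_0[simp]: "st 0 = 0" using st_add[of 0 0] by simp
lemma st_minus: "st (- x) = - st x"
proof -
  have "st x + st (-x) = 0" using st_add[of x "-x"] by simp
  from add.inverse_unique[OF this] show ?thesis by simp
qed
lemma st_diff: "st (x - y) = st x - st y" by (simp only: diff_conv_add_uminus st_add st_minus)
lemma st_1[simp]: "st 1 = 1"
proof -
  have "st 1 = st 1 * st (st 1)" by simp
  also have "\<dots> = st (st 1 * 1)" by (simp only: st_mult)
  also have "\<dots> = 1" by simp
  finally show ?thesis .
qed
lemma st_sum: "st (sum f A) = (\<Sum>x\<in>A. st (f x))"
  by (induct A rule: infinite_finite_induct) (auto simp: st_add)
lemma st_sum_list: "st (\<Sum>a\<leftarrow>as. f a) = (\<Sum>a\<leftarrow>as. st (f a))"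
  by (induct as) (auto simp: st_add)
lemma st_inj: "st x = st y \<Longrightarrow> x = y" using st_st by metis
lemma st_eq_0: "st x = 0 \<longleftrightarrow> x = 0" using st_0 st_st by metis

lemma sc_1_mult: "sc c x = sc c 1 * x" by (simp only: sc_mult_left mult_1_left)

lemma sc_st_sq: "st (sc c x) * sc c x = sc (conjugate c * c) (st x * x)"
  by (simp only: st_sc sc_mult_left sc_mult_right v.scale_scale mult.commute)

end

lemma sum_distinct_list_nth:
  assumes "distinct bs"
  shows "(\<Sum>b\<in>set bs. f b) = (\<Sum>i<length bs. f (bs ! i))"
proof -
  have "set bs = (!) bs ` {..<length bs}" by (auto simp: set_conv_nth)
  moreover have "inj_on ((!) bs) {..<length bs}" using assms by (simp add: inj_on_def nth_eq_iff_index_eq)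
  ultimately show ?thesis by (simp add: sum.reindex)
qed

context salg begin

definition lc :: "'k vec \<Rightarrow> 'a list \<Rightarrow> 'a" where
  "lc w bs = (\<Sum>i<length bs. sc (w $ i) (bs ! i))"

definition spanmod :: "'a set \<Rightarrow> 'a set \<Rightarrow> bool" where
  "spanmod K B \<longleftrightarrow> (\<forall>x. \<exists>y\<in>v.span B. x - y \<in> K)"

definition indepmod :: "'a set \<Rightarrow> 'a set \<Rightarrow> bool" where
  "indepmod K B \<longleftrightarrow> (\<forall>u. (\<Sum>b\<in>B. sc (u b) b) \<in> K \<longrightarrow> (\<forall>b\<in>B. u b = 0))"

lemma left_ideal_subspace: "left_ideal K \<Longrightarrow> v.subspace K"
  unfolding left_ideal_def v.subspace_def by (metis sc_1_mult)

lemma spanmod_remove: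
  assumes K: "v.subspace K" and fin: "finite B" and sp: "spanmod K B"
    and u: "(\<Sum>b\<in>B. sc (u b) b) \<in> K" and b0: "b0 \<in> B" "u b0 \<noteq> 0"
  shows "spanmod K (B - {b0})"
  unfolding spanmod_def
proof
  fix x
  from sp obtain y where y: "y \<in> v.span B" "x - y \<in> K" unfolding spanmod_def by blast
  have "B = insert b0 (B - {b0})" using b0 by auto
  with y(1) have "y \<in> v.span (insert b0 (B - {b0}))" by simp
  then obtain k where k: "y - sc k b0 \<in> v.span (B - {b0})" using v.span_breakdown_eq by blast
  define z where "z = (\<Sum>b\<in>B - {b0}. sc (u b) b)"
  have zsp: "z \<in> v.span (B - {b0})" unfolding z_def
    by (intro v.span_sum v.span_scale v.span_base) auto
  have sumB: "(\<Sum>b\<in>B. sc (u b) b) = sc (u b0) b0 + z"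
    unfolding z_def using fin b0 by (simp add: sum.remove)
  define y' where "y' = (y - sc k b0) - sc (k / u b0) z"
  have ysp: "y' \<in> v.span (B - {b0})" unfolding y'_def by (rule v.span_diff[OF k v.span_scale[OF zsp]])
  have eq: "x - y' = (x - y) + sc (k / u b0) (sc (u b0) b0 + z)"
    unfolding y'_def using b0(2) by (simp add: algebra_simps v.scale_right_distrib)
  have inK: "(x - y) + sc (k / u b0) (sc (u b0) b0 + z) \<in> K"
    using y(2) u sumB K by (metis v.subspace_add v.subspace_scale)
  show "\<exists>y\<in>v.span (B - {b0}). x - y \<in> K"
  proof (rule bexI[OF _ ysp])
    show "x - y' \<in> K" by (subst eq) (rule inK)
  qed
qed

lemma extract_indep:
  assumes K: "v.subspace K"
  shows "finite B \<Longrightarrow> spanmod K B \<Longrightarrow> \<exists>B'\<subseteq>B. spanmod K B' \<and> indepmod K B'"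
proof (induction B rule: measure_induct_rule[of card])
  case (less B)
  show ?case
  proof (cases "indepmod K B")
    case True with less show ?thesis by blast
  next
    case False
    then obtain u b0 where u: "(\<Sum>b\<in>B. sc (u b) b) \<in> K" "b0 \<in> B" "u b0 \<noteq> 0"
      unfolding indepmod_def by blast
    have sp: "spanmod K (B - {b0})" by (rule spanmod_remove[OF K less(2,3) u])
    have "card (B - {b0}) < card B" using less(2) u(2) by (rule card_Diff1_less)
    from less(1)[OF this _ sp] less(2) obtain B' where "B' \<subseteq> B - {b0}" "spanmod K B'" "indepmod K B'"
      by auto
    thus ?thesis by blast
  qed
qed

lemma lc_sum_set:
  assumes "distinct bs" "w \<in> carrier_vec (length bs)"
    "\<And>i. i < length bs \<Longrightarrow> w $ i = u (bs ! i)"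
  shows "lc w bs = (\<Sum>b\<in>set bs. sc (u b) b)"
  unfolding lc_def using assms by (simp add: sum_distinct_list_nth)

lemma exists_basis:
  assumes K: "v.subspace K" and fin: "finite B" and sp: "\<forall>x. \<exists>y\<in>v.span B. x - y \<in> K"
  shows "\<exists>bs. distinct bs \<and> (\<forall>x. \<exists>w\<in>carrier_vec (length bs). x - lc w bs \<in> K)
     \<and> (\<forall>w\<in>carrier_vec (length bs). lc w bs \<in> K \<longrightarrow> w = 0\<^sub>v (length bs))"
proof -
  from extract_indep[OF K fin] sp obtain B' where B': "B' \<subseteq> B" "spanmod K B'" "indepmod K B'"
    unfolding spanmod_def by blast
  have finB': "finite B'" using B'(1) fin finite_subset by auto
  obtain bs where bs: "set bs = B'" "distinct bs" using finite_distinct_list[OF finB'] by blast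
  have "\<forall>x. \<exists>w\<in>carrier_vec (length bs). x - lc w bs \<in> K"
  proof
    fix x
    from B'(2) obtain y where y: "y \<in> v.span B'" "x - y \<in> K" unfolding spanmod_def by blast
    from y(1) v.span_finite[OF finB'] obtain u where "y = (\<Sum>b\<in>B'. sc (u b) b)" by auto
    moreover have "lc (vec (length bs) (\<lambda>i. u (bs ! i))) bs = (\<Sum>b\<in>B'. sc (u b) b)"
      unfolding bs(1)[symmetric] by (rule lc_sum_set) (use bs in auto)
    ultimately show "\<exists>w\<in>carrier_vec (length bs). x - lc w bs \<in> K" using y(2)
      by (intro bexI[of _ "vec (length bs) (\<lambda>i. u (bs ! i))"]) auto
  qed
  moreover have "\<forall>w\<in>carrier_vec (length bs). lc w bs \<in> K \<longrightarrow> w = 0\<^sub>v (length bs)"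
  proof (intro ballI impI)
    fix w :: "'k vec" assume w: "w \<in> carrier_vec (length bs)" and inK: "lc w bs \<in> K"
    define u where "u b = w $ (THE i. i < length bs \<and> bs ! i = b)" for b
    have ui: "u (bs ! i) = w $ i" if "i < length bs" for i
    proof -
      have "(THE j. j < length bs \<and> bs ! j = bs ! i) = i"
        using that bs(2) by (auto simp: nth_eq_iff_index_eq)
      thus ?thesis unfolding u_def by simp
    qed
    have "lc w bs = (\<Sum>b\<in>B'. sc (u b) b)"
      unfolding bs(1)[symmetric] by (rule lc_sum_set) (use bs w ui in auto)
    with inK B'(3) have "\<forall>b\<in>B'. u b = 0" unfolding indepmod_def by auto
    thus "w = 0\<^sub>v (length bs)" using w ui bs(1) by (intro eq_vecI) auto
  qed
  ultimately show ?thesis using bs(2) by blast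
qed

lemma lc_add: "v1 \<in> carrier_vec (length bs) \<Longrightarrow> v2 \<in> carrier_vec (length bs) \<Longrightarrow>
   lc (v1 + v2) bs = lc v1 bs + lc v2 bs"
  unfolding lc_def by (simp add: v.scale_left_distrib sum.distrib)

lemma lc_smult: "w \<in> carrier_vec (length bs) \<Longrightarrow> lc (c \<cdot>\<^sub>v w) bs = sc c (lc w bs)"
  unfolding lc_def by (simp add: v.scale_sum_right)

lemma lc_zero[simp]: "lc (0\<^sub>v (length bs)) bs = 0"
  unfolding lc_def by simp

lemma lc_unit: assumes j: "j < length bs" shows "lc (unit_vec (length bs) j) bs = bs ! j"
proof -
  have "lc (unit_vec (length bs) j) bs = (\<Sum>i<length bs. if i = j then bs ! i else 0)"
    unfolding lc_def by (rule sum.cong) (auto simp: unit_vec_def)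
  also have "\<dots> = bs ! j" using j by (simp add: sum.delta)
  finally show ?thesis .
qed

lemma lc_minus: "v1 \<in> carrier_vec (length bs) \<Longrightarrow> v2 \<in> carrier_vec (length bs) \<Longrightarrow>
   lc (v1 - v2) bs = lc v1 bs - lc v2 bs"
  unfolding lc_def by (simp add: v.scale_left_diff_distrib sum_subtractf)

end

lemma vec_diff_eq_0_iff:
  assumes v: "(v::'k::ab_group_add vec) \<in> carrier_vec n" and w: "w \<in> carrier_vec n"
  shows "v - w = 0\<^sub>v n \<longleftrightarrow> v = w"
proof
  assume h: "v - w = 0\<^sub>v n"
  show "v = w"
  proof (rule eq_vecI)
    fix i assume "i < dim_vec w"
    hence i: "i < n" using w by auto
    have "(v - w) $ i = 0" using h i by simp
    thus "v $ i = w $ i" using i v w by simp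
  qed (use v w in auto)
next
  assume "v = w" thus "v - w = 0\<^sub>v n" using w by (intro eq_vecI) auto
qed

locale fcq = salg sc st for sc :: "'k::rclike \<Rightarrow> 'a::ring_1 \<Rightarrow> 'a" and st +
  fixes K :: "'a set" and bs :: "'a list"
  assumes K: "v.subspace K" and dist: "distinct bs"
    and spn: "\<forall>x. \<exists>w\<in>carrier_vec (length bs). x - lc w bs \<in> K"
    and ind: "\<forall>w\<in>carrier_vec (length bs). lc w bs \<in> K \<longrightarrow> w = 0\<^sub>v (length bs)"
begin

abbreviation "m \<equiv> length bs"

definition co :: "'a \<Rightarrow> 'k vec" where
  "co x = (SOME w. w \<in> carrier_vec m \<and> x - lc w bs \<in> K)"

lemma co: "co x \<in> carrier_vec m" "x - lc (co x) bs \<in> K"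
proof -
  from spn obtain w where "w \<in> carrier_vec m \<and> x - lc w bs \<in> K" by blast
  hence "co x \<in> carrier_vec m \<and> x - lc (co x) bs \<in> K" unfolding co_def by (rule someI)
  thus "co x \<in> carrier_vec m" "x - lc (co x) bs \<in> K" by auto
qed

lemma co_carrier[simp]: "co x \<in> carrier_vec m" by (rule co(1))
lemma dim_co[simp]: "dim_vec (co x) = m" using co(1) by auto

lemma co_unique: assumes w: "w \<in> carrier_vec m" and x: "x - lc w bs \<in> K" shows "co x = w"
proof -
  have "(x - lc w bs) - (x - lc (co x) bs) \<in> K" using x co(2) K v.subspace_diff by blast
  hence "lc (co x) bs - lc w bs \<in> K" by (simp add: algebra_simps)
  hence "lc (co x - w) bs \<in> K" using w by (simp add: lc_minus)
  hence "co x - w = 0\<^sub>v m" using ind w by auto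
  thus ?thesis using vec_diff_eq_0_iff[OF co_carrier w] by blast
qed

lemma co_lc: "w \<in> carrier_vec m \<Longrightarrow> co (lc w bs) = w"
  by (rule co_unique) (auto intro: v.subspace_0[OF K])

lemma co_add: "co (x + y) = co x + co y"
proof (rule co_unique)
  show "co x + co y \<in> carrier_vec m" by simp
  have "x + y - lc (co x + co y) bs = (x - lc (co x) bs) + (y - lc (co y) bs)"
    by (simp add: lc_add)
  thus "x + y - lc (co x + co y) bs \<in> K" using co(2) K v.subspace_add by metis
qed

lemma co_sc: "co (sc c x) = c \<cdot>\<^sub>v co x"
proof (rule co_unique)
  show "c \<cdot>\<^sub>v co x \<in> carrier_vec m" by simp
  have "sc c x - lc (c \<cdot>\<^sub>v co x) bs = sc c (x - lc (co x) bs)"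
    by (simp add: lc_smult v.scale_right_diff_distrib)
  thus "sc c x - lc (c \<cdot>\<^sub>v co x) bs \<in> K" using co(2) K v.subspace_scale by metis
qed

lemma co_zero_iff: "co x = 0\<^sub>v m \<longleftrightarrow> x \<in> K"
proof
  assume "co x = 0\<^sub>v m" thus "x \<in> K" using co(2)[of x] by simp
next
  assume "x \<in> K" thus "co x = 0\<^sub>v m" by (intro co_unique) auto
qed

lemma co_0[simp]: "co 0 = 0\<^sub>v m" using co_zero_iff v.subspace_0[OF K] by blast

lemma co_diff: "co (x - y) = co x - co y"
proof (rule co_unique)
  show "co x - co y \<in> carrier_vec m" by simp
  have "x - y - lc (co x - co y) bs = (x - lc (co x) bs) - (y - lc (co y) bs)"
    by (simp add: lc_minus)
  thus "x - y - lc (co x - co y) bs \<in> K" using co(2) K v.subspace_diff by metis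
qed

lemma co_eq_iff: "co x = co y \<longleftrightarrow> x - y \<in> K"
  using co_diff[of x y] co_zero_iff[of "x - y"] vec_diff_eq_0_iff[OF co_carrier co_carrier, of x y]
  by simp

end


locale fcq_li = fcq sc st K bs for sc :: "'k::rclike \<Rightarrow> 'a::ring_1 \<Rightarrow> 'a" and st K bs +
  assumes li: "left_ideal K"
begin

definition rep :: "'a \<Rightarrow> 'k mat" where
  "rep a = mat m m (\<lambda>(i,j). co (a * bs ! j) $ i)"

lemma rep_carrier[simp]: "rep a \<in> carrier_mat m m" unfolding rep_def by simp
lemma dim_rep[simp]: "dim_row (rep a) = m" "dim_col (rep a) = m" unfolding rep_def by simp_all

lemma li_mult: "x \<in> K \<Longrightarrow> a * x \<in> K" using li unfolding left_ideal_def by blast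

lemma mult_lc: "a * lc w bs = (\<Sum>j<m. sc (w $ j) (a * bs ! j))"
  unfolding lc_def by (simp add: sum_distrib_left sc_mult_right)

lemma lc_rep: assumes w: "w \<in> carrier_vec m"
  shows "lc (rep a *\<^sub>v w) bs = (\<Sum>j<m. sc (w $ j) (lc (co (a * bs ! j)) bs))"
proof -
  have "lc (rep a *\<^sub>v w) bs = (\<Sum>i<m. sc (\<Sum>j<m. co (a * bs ! j) $ i * w $ j) (bs ! i))"
    unfolding lc_def using w by (simp add: rep_def scalar_prod_def atLeast0LessThan mult.commute)
  also have "\<dots> = (\<Sum>i<m. \<Sum>j<m. sc (w $ j) (sc (co (a * bs ! j) $ i) (bs ! i)))"
    by (simp add: v.scale_sum_left mult.commute)
  also have "\<dots> = (\<Sum>j<m. \<Sum>i<m. sc (w $ j) (sc (co (a * bs ! j) $ i) (bs ! i)))"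
    by (rule sum.swap)
  also have "\<dots> = (\<Sum>j<m. sc (w $ j) (lc (co (a * bs ! j)) bs))"
    unfolding lc_def by (simp add: v.scale_sum_right)
  finally show ?thesis .
qed

lemma co_mult_lc: assumes w: "w \<in> carrier_vec m"
  shows "co (a * lc w bs) = rep a *\<^sub>v w"
proof (rule co_unique)
  show "rep a *\<^sub>v w \<in> carrier_vec m" by (rule mult_mat_vec_carrier[OF rep_carrier w])
  have "a * lc w bs - lc (rep a *\<^sub>v w) bs = (\<Sum>j<m. sc (w $ j) (a * bs ! j - lc (co (a * bs ! j)) bs))"
    unfolding mult_lc lc_rep[OF w] by (simp add: sum_subtractf v.scale_right_diff_distrib)
  also have "\<dots> \<in> K" using co(2) by (intro v.subspace_sum[OF K] v.subspace_scale[OF K]) auto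
  finally show "a * lc w bs - lc (rep a *\<^sub>v w) bs \<in> K" .
qed

lemma co_mult: "co (a * y) = rep a *\<^sub>v co y"
proof -
  have "a * y - a * lc (co y) bs \<in> K" using li_mult[OF co(2)[of y]] by (simp add: right_diff_distrib)
  hence "co (a * y) = co (a * lc (co y) bs)" using co_eq_iff by blast
  thus ?thesis using co_mult_lc by simp
qed

lemma rep_col: "j < m \<Longrightarrow> col (rep a) j = co (a * bs ! j)"
  unfolding rep_def by (intro eq_vecI) auto

lemma rep_mult: "rep (a * b) = rep a * rep b"
proof (rule eq_matI)
  fix i j assume ij: "i < dim_row (rep a * rep b)" "j < dim_col (rep a * rep b)"
  hence ij': "i < m" "j < m" by auto
  have "(rep a * rep b) $$ (i, j) = (rep a *\<^sub>v col (rep b) j) $ i"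
    using ij' by simp
  also have "\<dots> = co (a * (b * bs ! j)) $ i" using ij' by (simp add: rep_col co_mult)
  also have "\<dots> = rep (a * b) $$ (i,j)" using ij' by (simp add: rep_def mult.assoc)
  finally show "rep (a * b) $$ (i, j) = (rep a * rep b) $$ (i, j)" by simp
qed auto

lemma co_bs: "j < m \<Longrightarrow> co (bs ! j) = unit_vec m j"
  using co_lc[of "unit_vec m j"] lc_unit[of j bs] by simp

lemma rep_one: "rep 1 = 1\<^sub>m m"
  by (rule eq_matI) (auto simp: rep_def co_bs unit_vec_def)

lemma rep_add: "rep (a + b) = rep a + rep b"
  by (rule eq_matI) (auto simp: rep_def distrib_right co_add)

lemma rep_sc: "rep (sc c a) = c \<cdot>\<^sub>m rep a"
  by (rule eq_matI) (auto simp: rep_def sc_mult_left co_sc)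

lemma rep_pow: "rep (a ^ k) = rep a ^\<^sub>m k"
proof (induct k)
  case 0 show ?case by (simp add: rep_one)
next
  case (Suc k)
  have "rep (a ^ Suc k) = rep (a ^ k * a)" by (simp only: power_Suc2)
  also have "\<dots> = rep a ^\<^sub>m k * rep a" by (simp only: rep_mult Suc)
  finally show ?case by simp
qed

lemma hat_rep: "hat K = {p. det (rep p) = 0}"
  unfolding set_eq_iff
proof (intro allI iffI)
  fix p assume "p \<in> hat K"
  then obtain q where q: "q \<notin> K" "p * q \<in> K" unfolding hat_def by blast
  have "co q \<noteq> 0\<^sub>v m" using q co_zero_iff by blast
  moreover have "rep p *\<^sub>v co q = 0\<^sub>v m" using q co_mult co_zero_iff by metis
  ultimately show "p \<in> {p. det (rep p) = 0}" using det_0_iff_vec_prod_zero[OF rep_carrier] by force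
next
  fix p assume "p \<in> {p. det (rep p) = 0}"
  hence "det (rep p) = 0" by simp
  then obtain w where w: "w \<in> carrier_vec m" "w \<noteq> 0\<^sub>v m" "rep p *\<^sub>v w = 0\<^sub>v m"
    using det_0_iff_vec_prod_zero[OF rep_carrier] by blast
  have "lc w bs \<notin> K" using w co_lc co_zero_iff by metis
  moreover have "p * lc w bs \<in> K" using w co_mult_lc co_zero_iff by metis
  ultimately show "p \<in> hat K" unfolding hat_def by blast
qed

end

context salg begin

definition linf :: "('a \<Rightarrow> 'k) \<Rightarrow> bool" where
  "linf f \<longleftrightarrow> (\<forall>x y. f (x + y) = f x + f y) \<and> (\<forall>c x. f (sc c x) = c * f x)"

lemma linf_diff: "linf f \<Longrightarrow> f (x - y) = f x - f y"
proof -
  assume f: "linf f"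
  have "f x = f ((x - y) + y)" by simp
  also have "\<dots> = f (x - y) + f y" using f unfolding linf_def by blast
  finally show ?thesis by simp
qed

lemma linf_add: "linf f \<Longrightarrow> f (x + y) = f x + f y" unfolding linf_def by blast
lemma linf_sc: "linf f \<Longrightarrow> f (sc c x) = c * f x" unfolding linf_def by blast

lemma fk:
  assumes S: "v.subspace S" and lin: "\<forall>f\<in>set fs. linf f"
  shows "\<exists>B. finite B \<and> B \<subseteq> S \<and> (\<forall>x\<in>S. \<exists>y\<in>v.span B. \<forall>f\<in>set fs. f x = f y)"
  using lin
proof (induct fs)
  case Nil
  show ?case by (rule exI[of _ "{}"]) (auto intro: v.span_zero)
next
  case (Cons f fs)
  then obtain B where B: "finite B" "B \<subseteq> S" "\<forall>x\<in>S. \<exists>y\<in>v.span B. \<forall>g\<in>set fs. g x = g y"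
    by auto
  have linf_f: "linf f" and linfs: "\<forall>g\<in>set fs. linf g" using Cons(2) by auto
  have spS: "v.span B \<subseteq> S" using B(2) S by (rule v.span_minimal)
  show ?case
  proof (cases "\<exists>z\<in>S. (\<forall>g\<in>set fs. g z = 0) \<and> f z \<noteq> 0")
    case True
    then obtain z where z: "z \<in> S" "\<forall>g\<in>set fs. g z = 0" "f z \<noteq> 0" by blast
    show ?thesis
    proof (rule exI[of _ "insert z B"], intro conjI ballI)
      show "finite (insert z B)" using B by auto
      show "insert z B \<subseteq> S" using B z by auto
      fix x assume x: "x \<in> S"
      then obtain y where y: "y \<in> v.span B" "\<forall>g\<in>set fs. g x = g y" using B by blast
      define y' where "y' = y + sc ((f x - f y) / f z) z"
      have "y' \<in> v.span (insert z B)" unfolding y'_def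
        by (intro v.span_add v.span_scale) (auto intro: v.span_base v.span_mono[THEN subsetD, OF _ y(1)])
      moreover have "\<forall>g\<in>set (f # fs). g x = g y'"
      proof
        fix g assume "g \<in> set (f # fs)"
        show "g x = g y'"
        proof (cases "g \<in> set fs")
          case True
          hence "linf g" using linfs by auto
          hence "g y' = g y + ((f x - f y) / f z) * g z" unfolding y'_def by (simp add: linf_add linf_sc)
          moreover have "g z = 0" "g x = g y" using True z(2) y(2) by auto
          ultimately show ?thesis by simp
        next
          case False
          hence "g = f" using \<open>g \<in> set (f # fs)\<close> by auto
          have "f y' = f y + ((f x - f y) / f z) * f z" unfolding y'_def using linf_f by (simp add: linf_add linf_sc)
          thus ?thesis using \<open>g = f\<close> z(3) by simp
        qed
      qed
      ultimately show "\<exists>y\<in>v.span (insert z B). \<forall>g\<in>set (f # fs). g x = g y" by blast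
    qed
  next
    case False
    show ?thesis
    proof (rule exI[of _ B], intro conjI ballI)
      show "finite B" "B \<subseteq> S" using B by auto
      fix x assume x: "x \<in> S"
      then obtain y where y: "y \<in> v.span B" "\<forall>g\<in>set fs. g x = g y" using B by blast
      have xy: "x - y \<in> S" using x y(1) spS S v.subspace_diff by blast
      have "\<forall>g\<in>set fs. g (x - y) = 0" using y(2) linfs by (simp add: linf_diff)
      hence "f (x - y) = 0" using False xy by blast
      hence "f x = f y" using linf_f by (simp add: linf_diff)
      thus "\<exists>y\<in>v.span B. \<forall>g\<in>set (f # fs). g x = g y" using y by auto
    qed
  qed
qed

end


locale rli = salg sc st for sc :: "'k::rclike \<Rightarrow> 'a::ring_1 \<Rightarrow> 'a" and st +
  fixes I :: "'a set"
  assumes rl: "real_left_ideal st I" and fc: "fin_codim sc I"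
begin

lemma liI: "left_ideal I" using rl unfolding real_left_ideal_def by blast
lemma subI: "v.subspace I" using liI by (rule left_ideal_subspace)
lemma I0: "0 \<in> I" using liI unfolding left_ideal_def by blast
lemma I_mult: "x \<in> I \<Longrightarrow> a * x \<in> I" using liI unfolding left_ideal_def by blast
lemma I_add: "x \<in> I \<Longrightarrow> y \<in> I \<Longrightarrow> x + y \<in> I" using liI unfolding left_ideal_def by blast

lemma real_sum: "(\<Sum>a\<leftarrow>as. st a * a) \<in> I \<Longrightarrow> set as \<subseteq> I"
proof -
  assume h: "(\<Sum>a\<leftarrow>as. st a * a) \<in> I"
  have "(\<Sum>a\<leftarrow>as. st a * a) \<in> {x + st y | x y. x \<in> I \<and> y \<in> I}"
    using h I0 by (intro CollectI exI[of _ "\<Sum>a\<leftarrow>as. st a * a"] exI[of _ 0]) simp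
  thus ?thesis using rl unfolding real_left_ideal_def by blast
qed

lemma real_one: "st a * a \<in> I \<Longrightarrow> a \<in> I" using real_sum[of "[a]"] by simp

definition bsI :: "'a list" where
  "bsI = (SOME bs. distinct bs \<and> (\<forall>x. \<exists>w\<in>carrier_vec (length bs). x - lc w bs \<in> I)
     \<and> (\<forall>w\<in>carrier_vec (length bs). lc w bs \<in> I \<longrightarrow> w = 0\<^sub>v (length bs)))"

lemma bsI: "distinct bsI \<and> (\<forall>x. \<exists>w\<in>carrier_vec (length bsI). x - lc w bsI \<in> I)
     \<and> (\<forall>w\<in>carrier_vec (length bsI). lc w bsI \<in> I \<longrightarrow> w = 0\<^sub>v (length bsI))"
proof -
  from fc obtain B where "finite B" "\<forall>x. \<exists>y\<in>v.span B. x - y \<in> I" unfolding fin_codim_def by blast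
  from exists_basis[OF subI this] show ?thesis unfolding bsI_def by (rule someI_ex)
qed

sublocale iq: fcq_li sc st I bsI
  by (unfold_locales) (insert bsI subI liI, blast+)

definition J :: "'a set" where "J = {a. \<forall>b. a * b \<in> I}"

lemma J_char: "a \<in> J \<longleftrightarrow> (\<forall>k<iq.m. a * bsI ! k \<in> I)"
proof
  assume "a \<in> J" thus "\<forall>k<iq.m. a * bsI ! k \<in> I" unfolding J_def by blast
next
  assume h: "\<forall>k<iq.m. a * bsI ! k \<in> I"
  show "a \<in> J" unfolding J_def
  proof (intro CollectI allI)
    fix b
    have "a * lc (iq.co b) bsI = (\<Sum>j<iq.m. sc (iq.co b $ j) (a * bsI ! j))" by (rule iq.mult_lc)
    also have "\<dots> \<in> I" using h by (intro v.subspace_sum[OF subI] v.subspace_scale[OF subI]) auto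
    finally have 1: "a * lc (iq.co b) bsI \<in> I" .
    have 2: "a * (b - lc (iq.co b) bsI) \<in> I" using iq.co(2) by (rule I_mult)
    have "a * b = a * (b - lc (iq.co b) bsI) + a * lc (iq.co b) bsI" by (simp add: algebra_simps)
    thus "a * b \<in> I" using 1 2 I_add by simp
  qed
qed

lemma J_sub_I: assumes "a \<in> J" shows "a \<in> I"
proof -
  have "a * 1 \<in> I" using assms unfolding J_def by blast
  thus ?thesis by simp
qed

lemma J_left: "a \<in> J \<Longrightarrow> c * a \<in> J" unfolding J_def by (simp add: mult.assoc I_mult)
lemma J_right: "a \<in> J \<Longrightarrow> a * c \<in> J" unfolding J_def by (simp add: mult.assoc)
lemma J_add: "a \<in> J \<Longrightarrow> b \<in> J \<Longrightarrow> a + b \<in> J" unfolding J_def by (simp add: distrib_right I_add)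
lemma J_0: "0 \<in> J" unfolding J_def using I0 by simp

lemma liJ: "left_ideal J" unfolding left_ideal_def using J_0 J_add J_left by blast
lemma subJ: "v.subspace J" using liJ by (rule left_ideal_subspace)
lemma J_sc: "a \<in> J \<Longrightarrow> sc c a \<in> J" using subJ v.subspace_scale by blast
lemma J_diff: "a \<in> J \<Longrightarrow> b \<in> J \<Longrightarrow> a - b \<in> J" using subJ v.subspace_diff by blast
lemma J_minus: "a \<in> J \<Longrightarrow> - a \<in> J" using subJ v.subspace_neg by blast

lemma J_st: assumes a: "a \<in> J" shows "st a \<in> J"
  unfolding J_def
proof (intro CollectI allI)
  fix b
  have "a * (st a * b) \<in> I" using a unfolding J_def by blast
  hence "st b * (a * (st a * b)) \<in> I" by (rule I_mult)
  moreover have "st (st a * b) * (st a * b) = st b * (a * (st a * b))"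
    by (simp add: st_mult mult.assoc)
  ultimately have "st (st a * b) * (st a * b) \<in> I" by simp
  thus "st a * b \<in> I" by (rule real_one)
qed

lemma real_sum_J: assumes h: "(\<Sum>a\<leftarrow>as. st a * a) \<in> J" shows "set as \<subseteq> J"
proof
  fix a assume a: "a \<in> set as"
  show "a \<in> J" unfolding J_def
  proof (intro CollectI allI)
    fix b
    have "(\<Sum>a\<leftarrow>as. st a * a) * b \<in> I" using h unfolding J_def by blast
    hence "st b * ((\<Sum>a\<leftarrow>as. st a * a) * b) \<in> I" by (rule I_mult)
    moreover have "st b * ((\<Sum>a\<leftarrow>as. st a * a) * b) = (\<Sum>a\<leftarrow>as. st (a * b) * (a * b))"
      by (induct as) (simp_all add: distrib_left distrib_right st_mult mult.assoc)
    ultimately have "(\<Sum>x\<leftarrow>map (\<lambda>a. a * b) as. st x * x) \<in> I" by (simp add: o_def)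
    hence "set (map (\<lambda>a. a * b) as) \<subseteq> I" by (rule real_sum)
    thus "a * b \<in> I" using a by auto
  qed
qed

lemma real_one_J: "st a * a \<in> J \<Longrightarrow> a \<in> J" using real_sum_J[of "[a]"] by simp

definition fsJ :: "('a \<Rightarrow> 'k) list" where
  "fsJ = concat (map (\<lambda>k. map (\<lambda>i a. iq.co (a * bsI ! k) $ i) [0..<iq.m]) [0..<iq.m])"

lemma fsJ_lin: "\<forall>f\<in>set fsJ. linf f"
proof
  fix f assume "f \<in> set fsJ"
  then obtain k i where f: "f = (\<lambda>a. iq.co (a * bsI ! k) $ i)" "i < iq.m"
    unfolding fsJ_def by auto
  show "linf f" unfolding linf_def f(1)
  proof (intro conjI allI)
    fix x y show "iq.co ((x + y) * bsI ! k) $ i = iq.co (x * bsI ! k) $ i + iq.co (y * bsI ! k) $ i"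
      using f(2) by (simp only: distrib_right iq.co_add index_add_vec iq.dim_co)
  next
    fix c x show "iq.co (sc c x * bsI ! k) $ i = c * iq.co (x * bsI ! k) $ i"
      using f(2) by (simp only: sc_mult_left iq.co_sc index_smult_vec iq.dim_co)
  qed
qed

lemma fsJ_eq: assumes "\<forall>f\<in>set fsJ. f x = f y" shows "x - y \<in> J"
  unfolding J_char
proof (intro allI impI)
  fix k assume k: "k < iq.m"
  have "iq.co (x * bsI ! k) = iq.co (y * bsI ! k)"
  proof (rule eq_vecI)
    fix i assume "i < dim_vec (iq.co (y * bsI ! k))"
    hence i: "i < iq.m" by simp
    have "(\<lambda>a. iq.co (a * bsI ! k) $ i) \<in> (\<lambda>i a. iq.co (a * bsI ! k) $ i) ` {0..<iq.m}"
      using i by (intro imageI) simp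
    hence "(\<lambda>a. iq.co (a * bsI ! k) $ i) \<in> set (map (\<lambda>i a. iq.co (a * bsI ! k) $ i) [0..<iq.m])"
      by simp
    moreover have "map (\<lambda>i a. iq.co (a * bsI ! k) $ i) [0..<iq.m] \<in>
       (\<lambda>k. map (\<lambda>i a. iq.co (a * bsI ! k) $ i) [0..<iq.m]) ` {0..<iq.m}"
      using k by (intro imageI) simp
    hence "map (\<lambda>i a. iq.co (a * bsI ! k) $ i) [0..<iq.m] \<in>
       set (map (\<lambda>k. map (\<lambda>i a. iq.co (a * bsI ! k) $ i) [0..<iq.m]) [0..<iq.m])"
      by (simp only: set_map set_upt)
    ultimately have "(\<lambda>a. iq.co (a * bsI ! k) $ i) \<in> set fsJ" unfolding fsJ_def set_concat by blast
    from bspec[OF assms this] show "iq.co (x * bsI ! k) $ i = iq.co (y * bsI ! k) $ i" by simp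
  qed simp
  thus "(x - y) * bsI ! k \<in> I" using iq.co_eq_iff by (simp add: left_diff_distrib)
qed

lemma J_fin: "\<exists>B. finite B \<and> (\<forall>x. \<exists>y\<in>v.span B. x - y \<in> J)"
proof -
  obtain B where B: "finite B" "\<forall>x\<in>UNIV. \<exists>y\<in>v.span B. \<forall>f\<in>set fsJ. f x = f y"
    using fk[OF v.subspace_UNIV fsJ_lin] by blast
  have "\<forall>x. \<exists>y\<in>v.span B. x - y \<in> J"
  proof
    fix x obtain y where "y \<in> v.span B" "\<forall>f\<in>set fsJ. f x = f y" using B(2) by blast
    thus "\<exists>y\<in>v.span B. x - y \<in> J" using fsJ_eq by blast
  qed
  thus ?thesis using B(1) by blast
qed

lemma IJ_fin: "\<exists>B. finite B \<and> B \<subseteq> I \<and> (\<forall>x\<in>I. \<exists>y\<in>v.span B. x - y \<in> J)"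
proof -
  obtain B where B: "finite B" "B \<subseteq> I" "\<forall>x\<in>I. \<exists>y\<in>v.span B. \<forall>f\<in>set fsJ. f x = f y"
    using fk[OF subI fsJ_lin] by blast
  have "\<forall>x\<in>I. \<exists>y\<in>v.span B. x - y \<in> J"
  proof
    fix x assume "x \<in> I" then obtain y where "y \<in> v.span B" "\<forall>f\<in>set fsJ. f x = f y" using B(3) by blast
    thus "\<exists>y\<in>v.span B. x - y \<in> J" using fsJ_eq by blast
  qed
  thus ?thesis using B(1,2) by blast
qed

definition bsJ :: "'a list" where
  "bsJ = (SOME bs. distinct bs \<and> (\<forall>x. \<exists>w\<in>carrier_vec (length bs). x - lc w bs \<in> J)
     \<and> (\<forall>w\<in>carrier_vec (length bs). lc w bs \<in> J \<longrightarrow> w = 0\<^sub>v (length bs)))"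

lemma bsJ: "distinct bsJ \<and> (\<forall>x. \<exists>w\<in>carrier_vec (length bsJ). x - lc w bsJ \<in> J)
     \<and> (\<forall>w\<in>carrier_vec (length bsJ). lc w bsJ \<in> J \<longrightarrow> w = 0\<^sub>v (length bsJ))"
proof -
  from J_fin obtain B where "finite B" "\<forall>x. \<exists>y\<in>v.span B. x - y \<in> J" by blast
  from exists_basis[OF subJ this] show ?thesis unfolding bsJ_def by (rule someI_ex)
qed

sublocale jq: fcq_li sc st J bsJ
  by (unfold_locales) (insert bsJ subJ liJ, blast+)

end

definition mtr :: "'a::comm_monoid_add mat \<Rightarrow> 'a" where
  "mtr A = (\<Sum>i<dim_row A. A $$ (i,i))"

definition nnr :: "'k::real_algebra_1 \<Rightarrow> bool" where
  "nnr z \<longleftrightarrow> (\<exists>r\<ge>0. z = of_real r)"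

lemma mtr_comm:
  fixes A :: "'a::comm_semiring_0 mat"
  assumes A: "A \<in> carrier_mat n m" and B: "B \<in> carrier_mat m n"
  shows "mtr (A * B) = mtr (B * A)"
proof -
  have "mtr (A * B) = (\<Sum>i<n. \<Sum>k<m. A $$ (i,k) * B $$ (k,i))"
    unfolding mtr_def using A B by (simp add: scalar_prod_def atLeast0LessThan)
  also have "\<dots> = (\<Sum>k<m. \<Sum>i<n. B $$ (k,i) * A $$ (i,k))"
    by (subst sum.swap) (simp add: mult.commute)
  also have "\<dots> = mtr (B * A)"
    unfolding mtr_def using A B by (simp add: scalar_prod_def atLeast0LessThan)
  finally show ?thesis .
qed

lemma mtr_similar:
  fixes A :: "'a::comm_semiring_1 mat"
  assumes A: "A \<in> carrier_mat n n" and s: "similar_mat_wit A B P Q"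
  shows "mtr A = mtr B"
proof -
  note d = similar_mat_witD2[OF A s]
  have "mtr A = mtr (P * (B * Q))" using d by (simp add: assoc_mult_mat[of P n n B n Q n])
  also have "\<dots> = mtr ((B * Q) * P)" using d by (intro mtr_comm[of _ n n]) auto
  also have "\<dots> = mtr (B * (Q * P))" using d by (simp add: assoc_mult_mat[of B n n Q n P n])
  also have "\<dots> = mtr B" using d by simp
  finally show ?thesis .
qed

lemma strict_upper_pow:
  fixes B :: "'a::comm_semiring_1 mat"
  assumes B: "B \<in> carrier_mat n n" and z: "\<And>i j. i < n \<Longrightarrow> j < n \<Longrightarrow> j \<le> i \<Longrightarrow> B $$ (i,j) = 0"
  shows "i < n \<Longrightarrow> j < n \<Longrightarrow> j < i + k \<Longrightarrow> (B ^\<^sub>m k) $$ (i,j) = 0"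
proof (induct k arbitrary: i j)
  case 0 thus ?case using B by simp
next
  case (Suc k)
  have "(B ^\<^sub>m Suc k) $$ (i,j) = (\<Sum>l<n. (B ^\<^sub>m k) $$ (i,l) * B $$ (l,j))"
    using Suc(2,3) B by (simp add: scalar_prod_def atLeast0LessThan)
  also have "\<dots> = 0"
  proof (rule sum.neutral, rule ballI)
    fix l assume l: "l \<in> {..<n}"
    show "(B ^\<^sub>m k) $$ (i,l) * B $$ (l,j) = 0"
    proof (cases "l < i + k")
      case True thus ?thesis using Suc(1)[of i l] Suc(2) l by simp
    next
      case False hence "j \<le> l" using Suc(4) by simp
      thus ?thesis using z[of l j] l Suc(3) by simp
    qed
  qed
  finally show ?case .
qed

lemma strict_upper_nilp:
  fixes B :: "'a::comm_semiring_1 mat"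
  assumes B: "B \<in> carrier_mat n n" and z: "\<And>i j. i < n \<Longrightarrow> j < n \<Longrightarrow> j \<le> i \<Longrightarrow> B $$ (i,j) = 0"
  shows "B ^\<^sub>m n = 0\<^sub>m n n"
  by (rule eq_matI) (use B strict_upper_pow[OF B z] in auto)

lemma nnr_sum_list: "\<forall>e\<in>set es. nnr e \<Longrightarrow> nnr (sum_list (es :: 'k::real_algebra_1 list))"
proof (induct es)
  case Nil show ?case unfolding nnr_def by (rule exI[of _ 0]) simp
next
  case (Cons e es)
  then obtain r s where "r \<ge> 0" "e = of_real r" "s \<ge> 0" "sum_list es = of_real s"
    unfolding nnr_def by auto
  thus ?case unfolding nnr_def by (intro exI[of _ "r + s"]) simp
qed

lemma nnr_sum_list_0: "\<forall>e\<in>set es. nnr e \<Longrightarrow> sum_list (es :: 'k::real_algebra_1 list) = 0 \<Longrightarrow> \<forall>e\<in>set es. e = 0"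
proof (induct es)
  case Nil show ?case by simp
next
  case (Cons e es)
  obtain r where r: "r \<ge> 0" "e = of_real r" using Cons(2) unfolding nnr_def by auto
  obtain s where s: "s \<ge> 0" "sum_list es = of_real s" using nnr_sum_list[of es] Cons(2) unfolding nnr_def by auto
  have "of_real (r + s) = (0::'k)" using Cons(3) r s by simp
  hence "r + s = 0" using of_real_eq_0_iff by blast
  hence "r = 0" "s = 0" using r s by auto
  thus ?case using Cons r s by simp
qed

lemma mat_trace_complex:
  fixes A :: "complex mat"
  assumes A: "A \<in> carrier_mat n n" and ev: "\<And>e. eigenvalue A e \<Longrightarrow> nnr e"
  shows "nnr (mtr A) \<and> (mtr A = 0 \<longrightarrow> A ^\<^sub>m n = 0\<^sub>m n n)"
proof -
  obtain es where cp: "char_poly A = (\<Prod>a\<leftarrow>es. [:- a, 1:])" and len: "length es = n"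
    using char_poly_factorized[OF A] by blast
  obtain B P Q where sd: "schur_decomposition A es = (B,P,Q)" by (cases "schur_decomposition A es") auto
  from schur_decomposition[OF A cp sd]
  have s: "similar_mat_wit A B P Q" and ut: "upper_triangular B" and dg: "diag_mat B = es" by auto
  note d = similar_mat_witD2[OF A s]
  have tr: "mtr A = sum_list es"
  proof -
    have "mtr A = mtr B" by (rule mtr_similar[OF A s])
    also have "\<dots> = sum_list (diag_mat B)" unfolding mtr_def diag_mat_def
      using interv_sum_list_conv_sum_set_nat[of "\<lambda>i. B $$ (i,i)" 0 "dim_row B"]
      by (simp add: atLeast0LessThan)
    finally show ?thesis using dg by simp
  qed
  have esnn: "\<forall>e\<in>set es. nnr e"
  proof
    fix e assume e: "e \<in> set es"
    have "poly (char_poly A) e = 0" unfolding cp poly_prod_list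
      using e by (auto simp: prod_list_zero_iff)
    hence "eigenvalue A e" using eigenvalue_root_char_poly[OF A] by blast
    thus "nnr e" by (rule ev)
  qed
  have "nnr (mtr A)" using tr nnr_sum_list[OF esnn] by simp
  moreover have "mtr A = 0 \<longrightarrow> A ^\<^sub>m n = 0\<^sub>m n n"
  proof
    assume "mtr A = 0"
    hence z: "\<forall>e\<in>set es. e = 0" using nnr_sum_list_0[OF esnn] tr by simp
    have Bz: "B $$ (i,j) = 0" if "i < n" "j < n" "j \<le> i" for i j
    proof (cases "j = i")
      case True
      have "B $$ (i,i) = diag_mat B ! i" using that d by (simp add: diag_mat_def)
      also have "\<dots> = 0" using dg z that len by simp
      finally show ?thesis using True by simp
    next
      case False thus ?thesis using ut that d by (intro upper_triangularD) auto
    qed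
    have "B ^\<^sub>m n = 0\<^sub>m n n" by (rule strict_upper_nilp[OF d(5) Bz])
    moreover have "A ^\<^sub>m n = P * B ^\<^sub>m n * Q" by (rule similar_mat_wit_pow_id[OF s])
    ultimately show "A ^\<^sub>m n = 0\<^sub>m n n" using d by simp
  qed
  ultimately show ?thesis by blast
qed


lemma mat_trace_real:
  fixes M :: "real mat"
  assumes M: "M \<in> carrier_mat n n"
    and ev2: "\<And>u w a b. u \<in> carrier_vec n \<Longrightarrow> w \<in> carrier_vec n \<Longrightarrow> u \<noteq> 0\<^sub>v n \<or> w \<noteq> 0\<^sub>v n \<Longrightarrow>
       M *\<^sub>v u = a \<cdot>\<^sub>v u - b \<cdot>\<^sub>v w \<Longrightarrow> M *\<^sub>v w = b \<cdot>\<^sub>v u + a \<cdot>\<^sub>v w \<Longrightarrow> b = 0 \<and> a \<ge> 0"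
  shows "nnr (mtr M) \<and> (mtr M = 0 \<longrightarrow> M ^\<^sub>m n = 0\<^sub>m n n)"
proof -
  define Mc where "Mc = map_mat complex_of_real M"
  have Mc: "Mc \<in> carrier_mat n n" using M unfolding Mc_def by simp
  have ev: "nnr e" if e: "eigenvalue Mc e" for e
  proof -
    from e obtain v where v: "v \<in> carrier_vec n" "v \<noteq> 0\<^sub>v n" "Mc *\<^sub>v v = e \<cdot>\<^sub>v v"
      unfolding eigenvalue_def eigenvector_def using Mc by auto
    define u where "u = map_vec Re v"
    define w where "w = map_vec Im v"
    have uw: "u \<in> carrier_vec n" "w \<in> carrier_vec n" using v unfolding u_def w_def by auto
    have ent: "(\<Sum>j<n. complex_of_real (M $$ (i,j)) * v $ j) = e * v $ i" if i: "i < n" for i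
    proof -
      have "(Mc *\<^sub>v v) $ i = (e \<cdot>\<^sub>v v) $ i" using v(3) by simp
      thus ?thesis using i M v(1) unfolding Mc_def by (simp add: scalar_prod_def atLeast0LessThan)
    qed
    have Mu: "M *\<^sub>v u = Re e \<cdot>\<^sub>v u - Im e \<cdot>\<^sub>v w"
    proof (rule eq_vecI)
      fix i assume "i < dim_vec (Re e \<cdot>\<^sub>v u - Im e \<cdot>\<^sub>v w)"
      hence i: "i < n" using uw by simp
      have "(M *\<^sub>v u) $ i = (\<Sum>j<n. M $$ (i,j) * Re (v $ j))"
        using i M v(1) unfolding u_def by (simp add: scalar_prod_def atLeast0LessThan)
      also have "\<dots> = Re (\<Sum>j<n. complex_of_real (M $$ (i,j)) * v $ j)" by (simp add: Re_sum)
      also have "\<dots> = Re (e * v $ i)" using ent[OF i] by simp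
      also have "\<dots> = (Re e \<cdot>\<^sub>v u - Im e \<cdot>\<^sub>v w) $ i" using i v(1) unfolding u_def w_def by simp
      finally show "(M *\<^sub>v u) $ i = (Re e \<cdot>\<^sub>v u - Im e \<cdot>\<^sub>v w) $ i" .
    qed (use M uw in simp)
    have Mw: "M *\<^sub>v w = Im e \<cdot>\<^sub>v u + Re e \<cdot>\<^sub>v w"
    proof (rule eq_vecI)
      fix i assume "i < dim_vec (Im e \<cdot>\<^sub>v u + Re e \<cdot>\<^sub>v w)"
      hence i: "i < n" using uw by simp
      have "(M *\<^sub>v w) $ i = (\<Sum>j<n. M $$ (i,j) * Im (v $ j))"
        using i M v(1) unfolding w_def by (simp add: scalar_prod_def atLeast0LessThan)
      also have "\<dots> = Im (\<Sum>j<n. complex_of_real (M $$ (i,j)) * v $ j)" by (simp add: Im_sum)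
      also have "\<dots> = Im (e * v $ i)" using ent[OF i] by simp
      also have "\<dots> = (Im e \<cdot>\<^sub>v u + Re e \<cdot>\<^sub>v w) $ i" using i v(1) unfolding u_def w_def by simp
      finally show "(M *\<^sub>v w) $ i = (Im e \<cdot>\<^sub>v u + Re e \<cdot>\<^sub>v w) $ i" .
    qed (use M uw in simp)
    have nz: "u \<noteq> 0\<^sub>v n \<or> w \<noteq> 0\<^sub>v n"
    proof (rule ccontr)
      assume "\<not> ?thesis"
      hence "u = 0\<^sub>v n" "w = 0\<^sub>v n" by auto
      hence uz: "u = 0\<^sub>v n" and wz: "w = 0\<^sub>v n" by auto
      have "v = 0\<^sub>v n"
      proof (rule eq_vecI)
        fix i assume "i < dim_vec (0\<^sub>v n :: complex vec)"
        hence i: "i < n" by simp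
        have "u $ i = 0" "w $ i = 0" using uz wz i by auto
        hence "Re (v $ i) = 0" "Im (v $ i) = 0" using i v(1) unfolding u_def w_def by auto
        thus "v $ i = 0\<^sub>v n $ i" using i by (simp add: complex_eq_iff)
      qed (use v(1) in simp)
      thus False using v(2) by simp
    qed
    from ev2[OF uw nz Mu Mw] have "Im e = 0" "Re e \<ge> 0" by auto
    thus "nnr e" unfolding nnr_def by (intro exI[of _ "Re e"]) (simp add: complex_eq_iff)
  qed
  from mat_trace_complex[OF Mc ev]
  have *: "nnr (mtr Mc)" "mtr Mc = 0 \<Longrightarrow> Mc ^\<^sub>m n = 0\<^sub>m n n" by auto
  have trc: "mtr Mc = complex_of_real (mtr M)" unfolding mtr_def Mc_def using M by simp
  have "nnr (mtr M)" using *(1) unfolding trc nnr_def by auto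
  moreover have "mtr M = 0 \<longrightarrow> M ^\<^sub>m n = 0\<^sub>m n n"
  proof
    assume "mtr M = 0"
    hence "Mc ^\<^sub>m n = 0\<^sub>m n n" using *(2) trc by simp
    hence "map_mat complex_of_real (M ^\<^sub>m n) = 0\<^sub>m n n"
      unfolding Mc_def by (subst of_real_hom.mat_hom_pow[OF M])
    note h = this
    show "M ^\<^sub>m n = 0\<^sub>m n n"
    proof (rule eq_matI)
      fix i j assume "i < dim_row (0\<^sub>m n n :: real mat)" "j < dim_col (0\<^sub>m n n :: real mat)"
      hence ij: "i < n" "j < n" by auto
      have "map_mat complex_of_real (M ^\<^sub>m n) $$ (i,j) = 0" using h ij by simp
      hence "complex_of_real ((M ^\<^sub>m n) $$ (i,j)) = 0" using ij M by simp
      thus "(M ^\<^sub>m n) $$ (i,j) = 0\<^sub>m n n $$ (i,j)" using ij by simp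
    qed (use M in auto)
  qed
  ultimately show ?thesis by blast
qed

definition trace_good :: "'k::rclike itself \<Rightarrow> bool" where
 "trace_good T \<longleftrightarrow> (\<forall>n (M::'k mat). M \<in> carrier_mat n n \<longrightarrow>
   (\<forall>v e. v \<in> carrier_vec n \<longrightarrow> v \<noteq> 0\<^sub>v n \<longrightarrow> M *\<^sub>v v = e \<cdot>\<^sub>v v \<longrightarrow> nnr e) \<longrightarrow>
   (\<forall>u w (a::real) (b::real). u \<in> carrier_vec n \<longrightarrow> w \<in> carrier_vec n \<longrightarrow> (u \<noteq> 0\<^sub>v n \<or> w \<noteq> 0\<^sub>v n) \<longrightarrow>
      M *\<^sub>v u = of_real a \<cdot>\<^sub>v u - of_real b \<cdot>\<^sub>v w \<longrightarrow> M *\<^sub>v w = of_real b \<cdot>\<^sub>v u + of_real a \<cdot>\<^sub>v w \<longrightarrow>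
      b = 0 \<and> a \<ge> 0) \<longrightarrow>
   nnr (mtr M) \<and> (mtr M = 0 \<longrightarrow> M ^\<^sub>m n = 0\<^sub>m n n))"

lemma trace_good_complex: "trace_good TYPE(complex)"
  unfolding trace_good_def
proof (intro allI impI)
  fix n and M :: "complex mat"
  assume M: "M \<in> carrier_mat n n"
    and e1: "\<forall>v e. v \<in> carrier_vec n \<longrightarrow> v \<noteq> 0\<^sub>v n \<longrightarrow> M *\<^sub>v v = e \<cdot>\<^sub>v v \<longrightarrow> nnr e"
  show "nnr (mtr M) \<and> (mtr M = 0 \<longrightarrow> M ^\<^sub>m n = 0\<^sub>m n n)"
  proof (rule mat_trace_complex[OF M])
    fix e assume "eigenvalue M e"
    then obtain v where "v \<in> carrier_vec n" "v \<noteq> 0\<^sub>v n" "M *\<^sub>v v = e \<cdot>\<^sub>v v"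
      unfolding eigenvalue_def eigenvector_def using M by auto
    thus "nnr e" using e1 by blast
  qed
qed

lemma trace_good_real: "trace_good TYPE(real)"
  unfolding trace_good_def
proof (intro allI impI)
  fix n and M :: "real mat"
  assume M: "M \<in> carrier_mat n n"
    and e2: "\<forall>u w (a::real) (b::real). u \<in> carrier_vec n \<longrightarrow> w \<in> carrier_vec n \<longrightarrow> (u \<noteq> 0\<^sub>v n \<or> w \<noteq> 0\<^sub>v n) \<longrightarrow>
      M *\<^sub>v u = of_real a \<cdot>\<^sub>v u - of_real b \<cdot>\<^sub>v w \<longrightarrow> M *\<^sub>v w = of_real b \<cdot>\<^sub>v u + of_real a \<cdot>\<^sub>v w \<longrightarrow>
      b = 0 \<and> a \<ge> 0"
  show "nnr (mtr M) \<and> (mtr M = 0 \<longrightarrow> M ^\<^sub>m n = 0\<^sub>m n n)"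
    by (rule mat_trace_real[OF M]) (use e2 in auto)
qed


context salg begin
lemma st_pow: "st (a ^ n) = st a ^ n"
proof (induct n)
  case 0 show ?case by simp
next
  case (Suc n)
  have "st (a ^ Suc n) = st (a * a ^ n)" by simp
  also have "\<dots> = st a ^ n * st a" by (simp only: st_mult Suc)
  also have "\<dots> = st a ^ Suc n" by (simp only: power_Suc2)
  finally show ?case .
qed
end

locale rlit = rli sc st I for sc :: "'k::rclike \<Rightarrow> 'a::ring_1 \<Rightarrow> 'a" and st I +
  assumes tg: "trace_good TYPE('k)"
begin

lemma NEG:
  assumes d: "st x * x * y - sc (of_real r) y \<in> J" and y: "y \<notin> J"
  shows "r \<ge> 0"
proof (rule ccontr)
  assume "\<not> r \<ge> 0"
  hence r: "r < 0" by simp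
  define s where "s = sqrt (- r)"
  have s: "s > 0" "s * s = - r" using r unfolding s_def by (auto simp: real_sqrt_mult_self)
  define z where "z = sc (of_real s) y"
  have "st y * (st x * x * y - sc (of_real r) y) \<in> J" using d by (rule J_left)
  moreover have "st y * (st x * x * y - sc (of_real r) y) = st (x * y) * (x * y) + st z * z"
  proof -
    have "st z * z = sc (conjugate (of_real s) * of_real s) (st y * y)" unfolding z_def by (rule sc_st_sq)
    also have "conjugate (of_real s) * of_real s = (of_real (- r) :: 'k)"
      using s by (simp add: conjugate_of_real flip: of_real_mult)
    finally have "st z * z = sc (of_real (- r)) (st y * y)" .
    moreover have "st y * (st x * x * y - sc (of_real r) y) = st (x * y) * (x * y) - sc (of_real r) (st y * y)"
      by (simp add: st_mult right_diff_distrib sc_mult_right mult.assoc)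
    ultimately show ?thesis by (simp add: v.scale_minus_left)
  qed
  ultimately have "st (x * y) * (x * y) + st z * z \<in> J" by simp
  moreover have "(\<Sum>a\<leftarrow>[x * y, z]. st a * a) = st (x * y) * (x * y) + st z * z" by simp
  ultimately have "set [x * y, z] \<subseteq> J" using real_sum_J by metis
  hence "z \<in> J" by simp
  hence "sc (of_real (1 / s)) z \<in> J" by (rule J_sc)
  moreover have "sc (of_real (1 / s)) z = y" unfolding z_def using s
    by (simp add: v.scale_scale flip: of_real_mult)
  ultimately show False using y by simp
qed

lemma E1:
  assumes v: "v \<in> carrier_vec jq.m" "v \<noteq> 0\<^sub>v jq.m"
    and ev: "jq.rep (st x * x) *\<^sub>v v = e \<cdot>\<^sub>v v"
  shows "nnr e"
proof -
  define h where "h = st x * x"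
  have sth: "st h = h" unfolding h_def by (simp add: st_mult)
  define y where "y = lc v bsJ"
  have coy: "jq.co y = v" unfolding y_def by (rule jq.co_lc[OF v(1)])
  have yJ: "y \<notin> J" using coy v(2) jq.co_zero_iff by blast
  have "jq.co (h * y) = jq.co (sc e y)"
    using jq.co_mult[of h y] coy ev jq.co_sc[of e y] unfolding h_def by simp
  hence d: "h * y - sc e y \<in> J" using jq.co_eq_iff by blast
  define P where "P = st y * h * y"
  define Y where "Y = st y * y"
  have d1: "P - sc e Y \<in> J"
  proof -
    have "st y * (h * y - sc e y) \<in> J" using d by (rule J_left)
    moreover have "st y * (h * y - sc e y) = P - sc e Y"
      unfolding P_def Y_def by (simp add: right_diff_distrib sc_mult_right mult.assoc)
    ultimately show ?thesis by simp
  qed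
  have d2: "P - sc (conjugate e) Y \<in> J"
  proof -
    have "st (P - sc e Y) \<in> J" using d1 by (rule J_st)
    moreover have "st (P - sc e Y) = P - sc (conjugate e) Y"
      unfolding P_def Y_def by (simp add: st_diff st_sc st_mult sth mult.assoc)
    ultimately show ?thesis by simp
  qed
  have "(P - sc e Y) - (P - sc (conjugate e) Y) \<in> J" using d1 d2 by (rule J_diff)
  moreover have "(P - sc e Y) - (P - sc (conjugate e) Y) = sc (conjugate e - e) Y"
    by (simp add: v.scale_left_diff_distrib)
  ultimately have d3: "sc (conjugate e - e) Y \<in> J" by simp
  have ce: "conjugate e = e"
  proof (rule ccontr)
    assume ne: "conjugate e \<noteq> e"
    have "sc (inverse (conjugate e - e)) (sc (conjugate e - e) Y) \<in> J" using d3 by (rule J_sc)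
    hence "Y \<in> J" using ne by (simp add: v.scale_scale)
    hence "y \<in> J" unfolding Y_def by (rule real_one_J)
    thus False using yJ by simp
  qed
  then obtain r where r: "e = of_real r" using conjugate_fixed by blast
  have "r \<ge> 0" by (rule NEG[of x y r]) (use d yJ r h_def in simp_all)
  thus "nnr e" unfolding nnr_def using r by blast
qed

lemma E2:
  assumes uw: "u \<in> carrier_vec jq.m" "w \<in> carrier_vec jq.m" and nz: "u \<noteq> 0\<^sub>v jq.m \<or> w \<noteq> 0\<^sub>v jq.m"
    and Mu: "jq.rep (st x * x) *\<^sub>v u = of_real a \<cdot>\<^sub>v u - of_real b \<cdot>\<^sub>v w"
    and Mw: "jq.rep (st x * x) *\<^sub>v w = of_real b \<cdot>\<^sub>v u + of_real a \<cdot>\<^sub>v w"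
  shows "b = 0 \<and> a \<ge> 0"
proof -
  define h where "h = st x * x"
  have sth: "st h = h" unfolding h_def by (simp add: st_mult)
  define A :: 'k where "A = of_real a"
  define B :: 'k where "B = of_real b"
  have cA: "conjugate A = A" and cB: "conjugate B = B" unfolding A_def B_def by (simp_all add: conjugate_of_real)
  define y1 where "y1 = lc u bsJ"
  define y2 where "y2 = lc w bsJ"
  have co1: "jq.co y1 = u" unfolding y1_def by (rule jq.co_lc[OF uw(1)])
  have co2: "jq.co y2 = w" unfolding y2_def by (rule jq.co_lc[OF uw(2)])
  have "jq.co (h * y1) = jq.co (sc A y1 - sc B y2)"
    using jq.co_mult[of h y1] co1 co2 Mu unfolding h_def A_def B_def by (simp add: jq.co_diff jq.co_sc)
  hence d1: "h * y1 - (sc A y1 - sc B y2) \<in> J" using jq.co_eq_iff by blast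
  have "jq.co (h * y2) = jq.co (sc B y1 + sc A y2)"
    using jq.co_mult[of h y2] co1 co2 Mw unfolding h_def A_def B_def by (simp add: jq.co_add jq.co_sc)
  hence d2: "h * y2 - (sc B y1 + sc A y2) \<in> J" using jq.co_eq_iff by blast
  have T1: "st y1 * h * y2 - sc B (st y1 * y1) - sc A (st y1 * y2) \<in> J"
  proof -
    have "st y1 * (h * y2 - (sc B y1 + sc A y2)) \<in> J" using d2 by (rule J_left)
    thus ?thesis by (simp add: right_diff_distrib distrib_left sc_mult_right mult.assoc diff_diff_eq)
  qed
  have T2: "st y1 * h * y2 - sc A (st y1 * y2) + sc B (st y2 * y2) \<in> J"
  proof -
    have "st y2 * (h * y1 - (sc A y1 - sc B y2)) \<in> J" using d1 by (rule J_left)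
    hence "st (st y2 * (h * y1 - (sc A y1 - sc B y2))) \<in> J" by (rule J_st)
    moreover have "st (st y2 * (h * y1 - (sc A y1 - sc B y2))) = st y1 * h * y2 - sc A (st y1 * y2) + sc B (st y2 * y2)"
      by (simp add: st_add st_diff st_sc st_mult sth cA cB right_diff_distrib sc_mult_right sc_mult_left mult.assoc
            algebra_simps)
    ultimately show ?thesis by simp
  qed
  have "(st y1 * h * y2 - sc B (st y1 * y1) - sc A (st y1 * y2)) -
        (st y1 * h * y2 - sc A (st y1 * y2) + sc B (st y2 * y2)) \<in> J"
    using T1 T2 by (rule J_diff)
  moreover have "(st y1 * h * y2 - sc B (st y1 * y1) - sc A (st y1 * y2)) -
        (st y1 * h * y2 - sc A (st y1 * y2) + sc B (st y2 * y2)) = sc (- B) (st y1 * y1 + st y2 * y2)"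
    by (simp add: algebra_simps v.scale_right_distrib)
  ultimately have d3: "sc (- B) (st y1 * y1 + st y2 * y2) \<in> J" by simp
  have b0: "b = 0"
  proof (rule ccontr)
    assume "b \<noteq> 0"
    hence Bn: "- B \<noteq> 0" unfolding B_def by simp
    have "sc (inverse (- B)) (sc (- B) (st y1 * y1 + st y2 * y2)) \<in> J" using d3 by (rule J_sc)
    hence "st y1 * y1 + st y2 * y2 \<in> J" using Bn by (simp add: v.scale_scale)
    moreover have "(\<Sum>a\<leftarrow>[y1, y2]. st a * a) = st y1 * y1 + st y2 * y2" by simp
    ultimately have "set [y1, y2] \<subseteq> J" using real_sum_J by metis
    hence "y1 \<in> J" "y2 \<in> J" by auto
    hence "u = 0\<^sub>v jq.m" "w = 0\<^sub>v jq.m" using co1 co2 jq.co_zero_iff by auto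
    thus False using nz by simp
  qed
  have B0: "B = 0" unfolding B_def b0 by simp
  have "a \<ge> 0"
  proof (cases "y1 \<in> J")
    case False
    show ?thesis by (rule NEG[of x y1 a]) (use d1 False B0 h_def A_def in simp_all)
  next
    case True
    hence "u = 0\<^sub>v jq.m" using co1 jq.co_zero_iff by auto
    hence "w \<noteq> 0\<^sub>v jq.m" using nz by simp
    hence y2J: "y2 \<notin> J" using co2 jq.co_zero_iff by auto
    show ?thesis by (rule NEG[of x y2 a]) (use d2 y2J B0 h_def A_def in simp_all)
  qed
  thus ?thesis using b0 by simp
qed

lemma nilp_herm: assumes sth: "st h = h" shows "h ^ k \<in> J \<Longrightarrow> h \<in> J"
proof (induct k rule: less_induct)
  case (less k)
  show ?case
  proof (cases "k \<le> 1")
    case True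
    show ?thesis
    proof (cases "k = 0")
      case True
      hence "1 \<in> J" using less(2) by simp
      hence "h * 1 \<in> J" by (rule J_left)
      thus ?thesis by simp
    next
      case False hence "k = 1" using True by simp
      thus ?thesis using less(2) by simp
    qed
  next
    case False
    define j where "j = (k + 1) div 2"
    have j: "j < k" "k \<le> 2 * j" using False unfolding j_def by auto
    have "h ^ (2 * j - k) * h ^ k \<in> J" using less(2) by (rule J_left)
    moreover have "h ^ (2 * j - k) * h ^ k = st (h ^ j) * h ^ j"
      using j by (simp add: st_pow sth flip: power_add) (simp add: mult_2)
    ultimately have "st (h ^ j) * h ^ j \<in> J" by simp
    hence "h ^ j \<in> J" by (rule real_one_J)
    thus ?thesis by (rule less(1)[OF j(1)])
  qed
qed

definition tau :: "'a \<Rightarrow> 'k" where "tau a = mtr (jq.rep a)"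

lemma tau_pos: "nnr (tau (st x * x))" and tau_zero: "tau (st x * x) = 0 \<Longrightarrow> x \<in> J"
proof -
  let ?M = "jq.rep (st x * x)"
  have M: "?M \<in> carrier_mat jq.m jq.m" by simp
  have "nnr (mtr ?M) \<and> (mtr ?M = 0 \<longrightarrow> ?M ^\<^sub>m jq.m = 0\<^sub>m jq.m jq.m)"
    using tg[unfolded trace_good_def, rule_format, OF M] E1 E2 by blast
  hence *: "nnr (tau (st x * x))" "tau (st x * x) = 0 \<Longrightarrow> ?M ^\<^sub>m jq.m = 0\<^sub>m jq.m jq.m"
    unfolding tau_def by auto
  show "nnr (tau (st x * x))" by (rule *(1))
  assume "tau (st x * x) = 0"
  hence "jq.rep ((st x * x) ^ jq.m) = 0\<^sub>m jq.m jq.m" using *(2) by (simp add: jq.rep_pow)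
  moreover have "0\<^sub>m jq.m jq.m *\<^sub>v jq.co 1 = 0\<^sub>v jq.m"
    by (rule eq_vecI) (simp_all add: scalar_prod_def)
  ultimately have "jq.co ((st x * x) ^ jq.m * 1) = 0\<^sub>v jq.m"
    by (simp only: jq.co_mult)
  hence "(st x * x) ^ jq.m \<in> J" using jq.co_zero_iff by simp
  hence "st x * x \<in> J" by (rule nilp_herm[rotated]) (simp add: st_mult)
  thus "x \<in> J" by (rule real_one_J)
qed

end

lemma mtr_add: "A \<in> carrier_mat n n \<Longrightarrow> B \<in> carrier_mat n n \<Longrightarrow> mtr (A + B) = mtr A + mtr B"
  unfolding mtr_def by (simp add: sum.distrib)

lemma mtr_smult: "(A::'a::comm_ring_1 mat) \<in> carrier_mat n n \<Longrightarrow> mtr (c \<cdot>\<^sub>m A) = c * mtr A"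
  unfolding mtr_def by (simp add: sum_distrib_left)

lemma mtr_zero: "mtr (0\<^sub>m n n) = 0" unfolding mtr_def by simp

context rlit begin

lemma tau_add: "tau (a + b) = tau a + tau b"
  unfolding tau_def by (simp add: jq.rep_add mtr_add[of _ jq.m])

lemma tau_sc: "tau (sc c a) = c * tau a"
  unfolding tau_def by (simp add: jq.rep_sc mtr_smult[of _ jq.m])

lemma tau_J: assumes j: "j \<in> J" shows "tau j = 0"
proof -
  have "jq.rep j = 0\<^sub>m jq.m jq.m"
  proof (rule eq_matI)
    fix i k assume "i < dim_row (0\<^sub>m jq.m jq.m :: 'k mat)" "k < dim_col (0\<^sub>m jq.m jq.m :: 'k mat)"
    hence ik: "i < jq.m" "k < jq.m" by auto
    have "j * bsJ ! k \<in> J" using j by (rule J_right)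
    hence "jq.co (j * bsJ ! k) = 0\<^sub>v jq.m" using jq.co_zero_iff by blast
    thus "jq.rep j $$ (i, k) = 0\<^sub>m jq.m jq.m $$ (i, k)" using ik by (simp add: jq.rep_def)
  qed auto
  thus ?thesis unfolding tau_def by (simp add: mtr_zero)
qed

definition tau' :: "'a \<Rightarrow> 'k" where "tau' a = (tau a + conjugate (tau (st a))) / 2"

lemma tau'_add: "tau' (a + b) = tau' a + tau' b"
  unfolding tau'_def by (simp add: tau_add st_add conjugate_dist_add add_divide_distrib)

lemma tau'_sc: "tau' (sc c a) = c * tau' a"
proof -
  have "conjugate (tau (st (sc c a))) = c * conjugate (tau (st a))"
    by (simp only: st_sc tau_sc conjugate_dist_mul conjugate_id)
  thus ?thesis unfolding tau'_def by (simp add: tau_sc distrib_left)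
qed

lemma tau'_st: "tau' (st a) = conjugate (tau' a)"
proof -
  have "conjugate (tau' a) = (conjugate (tau a) + tau (st a)) / 2"
    unfolding tau'_def by (simp only: conjugate_divide conjugate_dist_add conjugate_id conjugate_numeral)
  thus ?thesis unfolding tau'_def by (simp add: add.commute)
qed

lemma tau'_J: "j \<in> J \<Longrightarrow> tau' j = 0"
  unfolding tau'_def using tau_J J_st by simp

lemma tau'_herm: "tau' (st x * x) = tau (st x * x)"
proof -
  obtain r where r: "tau (st x * x) = of_real r" using tau_pos[of x] unfolding nnr_def by blast
  have "st (st x * x) = st x * x" by (simp add: st_mult)
  thus ?thesis unfolding tau'_def using r by (simp add: conjugate_of_real)
qed

definition ip :: "'a \<Rightarrow> 'a \<Rightarrow> 'k" where "ip x y = tau' (st y * x)"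

lemma ip_add_left: "ip (x + x') y = ip x y + ip x' y"
  unfolding ip_def by (simp add: distrib_left tau'_add)
lemma ip_sc_left: "ip (sc c x) y = c * ip x y"
  unfolding ip_def by (simp add: sc_mult_right tau'_sc)
lemma ip_conj: "ip y x = conjugate (ip x y)"
  unfolding ip_def by (metis st_mult st_st tau'_st)
lemma ip_add_right: "ip x (y + y') = ip x y + ip x y'"
  by (metis ip_conj ip_add_left conjugate_dist_add)
lemma ip_sc_right: "ip x (sc c y) = conjugate c * ip x y"
  by (metis ip_conj ip_sc_left conjugate_dist_mul)
lemma ip_diff_left: "ip (x - x') y = ip x y - ip x' y"
  using ip_add_left[of "x - x'" x' y] by simp
lemma ip_diff_right: "ip x (y - y') = ip x y - ip x y'"
  using ip_add_right[of x "y - y'" y'] by simp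
lemma ip_zero_left[simp]: "ip 0 y = 0" using ip_sc_left[of 0 0 y] by simp
lemma ip_zero_right[simp]: "ip x 0 = 0" using ip_sc_right[of x 0 0] by simp
lemma ip_sum_left: "ip (\<Sum>i\<in>A. f i) y = (\<Sum>i\<in>A. ip (f i) y)"
  by (induct A rule: infinite_finite_induct) (auto simp: ip_add_left)
lemma ip_sum_right: "ip x (\<Sum>i\<in>A. f i) = (\<Sum>i\<in>A. ip x (f i))"
  by (induct A rule: infinite_finite_induct) (auto simp: ip_add_right)
lemma ip_self: "ip x x = tau (st x * x)" unfolding ip_def by (rule tau'_herm)
lemma ip_self_nnr: "nnr (ip x x)" unfolding ip_self by (rule tau_pos)
lemma ip_self_zero: "ip x x = 0 \<Longrightarrow> x \<in> J" unfolding ip_self by (rule tau_zero)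
lemma ip_J_right: "j \<in> J \<Longrightarrow> ip x j = 0"
  unfolding ip_def by (intro tau'_J J_right J_st)
lemma ip_J_left: "j \<in> J \<Longrightarrow> ip j y = 0"
  unfolding ip_def by (intro tau'_J J_left)
lemma ip_adj: "ip (a * x) y = ip x (st a * y)"
  unfolding ip_def by (simp add: st_mult mult.assoc)

lemma ip_orth_subspace: "v.subspace {w. ip u w = 0}"
  unfolding v.subspace_def by (auto simp: ip_add_right ip_sc_right)

lemma ip_orth_span: "(\<And>w. w \<in> S \<Longrightarrow> ip u w = 0) \<Longrightarrow> w \<in> v.span S \<Longrightarrow> ip u w = 0"
  using v.span_minimal[OF _ ip_orth_subspace, of S u] by blast

definition nrm :: "'a \<Rightarrow> real" where "nrm x = norm (ip x x)"

lemma ip_self_nrm: "ip x x = of_real (nrm x)" "nrm x \<ge> 0"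
proof -
  obtain r where r: "r \<ge> 0" "ip x x = of_real r" using ip_self_nnr[of x] unfolding nnr_def by blast
  thus "ip x x = of_real (nrm x)" unfolding nrm_def by simp
  show "nrm x \<ge> 0" unfolding nrm_def by simp
qed

definition proj :: "'a list \<Rightarrow> 'a \<Rightarrow> 'a" where
  "proj us x = x - (\<Sum>k<length us. sc (ip x (us ! k)) (us ! k))"

definition onl :: "'a list \<Rightarrow> bool" where
  "onl us \<longleftrightarrow> (\<forall>i<length us. \<forall>j<length us. ip (us ! i) (us ! j) = (if i = j then 1 else 0))"

definition gstep :: "'a list \<Rightarrow> 'a \<Rightarrow> 'a list" where
  "gstep us x = (if ip (proj us x) (proj us x) = 0 then us
      else us @ [sc (of_real (1 / sqrt (nrm (proj us x)))) (proj us x)])"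

definition gs :: "'a list \<Rightarrow> 'a list \<Rightarrow> 'a list" where
  "gs us xs = foldl gstep us xs"

lemma ip_lincomb: assumes on: "onl us" and j: "j < length us"
  shows "ip (\<Sum>k<length us. sc (c k) (us ! k)) (us ! j) = c j"
proof -
  have "ip (\<Sum>k<length us. sc (c k) (us ! k)) (us ! j) = (\<Sum>k<length us. c k * (if k = j then 1 else 0))"
    using on j unfolding onl_def by (simp add: ip_sum_left ip_sc_left)
  also have "\<dots> = c j" using j by (simp add: if_distrib sum.delta cong: if_cong)
  finally show ?thesis .
qed

lemma ip_proj: assumes on: "onl us" and j: "j < length us"
  shows "ip (proj us x) (us ! j) = 0"
  unfolding proj_def ip_diff_left ip_lincomb[OF on j] by simp

lemma proj_span: "x - proj us x \<in> v.span (set us)"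
proof -
  have "(\<Sum>k<length us. sc (ip x (us ! k)) (us ! k)) \<in> v.span (set us)"
    by (rule v.span_sum, rule v.span_scale, rule v.span_base) simp
  thus ?thesis unfolding proj_def by simp
qed

lemma proj_in_span: "proj us x \<in> v.span (insert x (set us))"
proof -
  have "x \<in> v.span (insert x (set us))" by (rule v.span_base) simp
  moreover have "x - proj us x \<in> v.span (insert x (set us))"
    using proj_span v.span_mono[of "set us" "insert x (set us)"] by blast
  ultimately have "x - (x - proj us x) \<in> v.span (insert x (set us))" by (rule v.span_diff)
  thus ?thesis by simp
qed

lemma gstep_prefix: "\<exists>ts. gstep us x = us @ ts" unfolding gstep_def by auto

lemma gstep_onl: assumes on: "onl us" shows "onl (gstep us x)"
proof (cases "ip (proj us x) (proj us x) = 0")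
  case True thus ?thesis using on unfolding gstep_def by simp
next
  case False
  define y where "y = proj us x"
  define r where "r = nrm y"
  have r: "ip y y = of_real r" "r > 0" using ip_self_nrm[of y] False unfolding r_def y_def by auto
  define e where "e = sc (of_real (1 / sqrt r)) y"
  have g: "gstep us x = us @ [e]" using False unfolding gstep_def e_def r_def y_def by simp
  have ee: "ip e e = 1"
  proof -
    define t where "t = 1 / sqrt r"
    have "ip e e = of_real t * (conjugate (of_real t) * ip y y)"
      unfolding e_def t_def by (simp only: ip_sc_left ip_sc_right mult.left_commute)
    also have "\<dots> = of_real t * (of_real t * of_real r)" by (simp only: conjugate_of_real r(1))
    also have "\<dots> = of_real (t * t * r)" by (simp only: of_real_mult mult.assoc)
    also have "t * t * r = 1"
    proof -
      have "sqrt r * sqrt r = r" using r(2) by simp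
      thus ?thesis unfolding t_def using r(2) by (simp add: field_simps)
    qed
    finally show ?thesis by simp
  qed
  have eu: "ip e (us ! j) = 0" if "j < length us" for j
    unfolding e_def y_def using ip_proj[OF on that] by (simp add: ip_sc_left)
  have ue: "ip (us ! j) e = 0" if "j < length us" for j
    using eu[OF that] ip_conj[of "us ! j" e] by simp
  show ?thesis unfolding g onl_def
  proof (intro allI impI)
    fix i j assume i: "i < length (us @ [e])" and j: "j < length (us @ [e])"
    show "ip ((us @ [e]) ! i) ((us @ [e]) ! j) = (if i = j then 1 else 0)"
    proof (cases "i < length us"; cases "j < length us")
      assume "i < length us" "j < length us"
      thus ?thesis using on unfolding onl_def by (simp add: nth_append)
    next
      assume "i < length us" "\<not> j < length us"
      hence "j = length us" using j by simp
      thus ?thesis using ue \<open>i < length us\<close> by (simp add: nth_append)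
    next
      assume "\<not> i < length us" "j < length us"
      hence "i = length us" using i by simp
      thus ?thesis using eu \<open>j < length us\<close> by (simp add: nth_append)
    next
      assume "\<not> i < length us" "\<not> j < length us"
      hence "i = length us" "j = length us" using i j by auto
      thus ?thesis using ee by (simp add: nth_append)
    qed
  qed
qed

lemma gstep_span: "\<exists>z\<in>v.span (set (gstep us x)). x - z \<in> J"
proof (cases "ip (proj us x) (proj us x) = 0")
  case True
  hence "proj us x \<in> J" by (rule ip_self_zero)
  moreover have "x - proj us x \<in> v.span (set (gstep us x))" using True proj_span unfolding gstep_def by simp
  ultimately show ?thesis by (intro bexI[of _ "x - proj us x"]) auto
next
  case False
  define y where "y = proj us x"
  define r where "r = nrm y"
  have r: "ip y y = of_real r" "r > 0" using ip_self_nrm[of y] False unfolding r_def y_def by auto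
  define e where "e = sc (of_real (1 / sqrt r)) y"
  have g: "gstep us x = us @ [e]" using False unfolding gstep_def e_def r_def y_def by simp
  have "y = sc (of_real (sqrt r)) e" unfolding e_def using r(2)
    by (simp add: v.scale_scale flip: of_real_mult)
  moreover have "sc (of_real (sqrt r)) e \<in> v.span (set (us @ [e]))"
    by (rule v.span_scale, rule v.span_base) simp
  ultimately have "y \<in> v.span (set (gstep us x))" unfolding g by simp
  moreover have "x - y \<in> v.span (set (gstep us x))" unfolding g y_def
    using proj_span v.span_mono[of "set us" "set (us @ [e])"] by auto
  ultimately have "(x - y) + y \<in> v.span (set (gstep us x))" by (rule v.span_add[rotated])
  thus ?thesis using J_0 by (intro bexI[of _ x]) auto
qed

lemma gstep_sub: "set (gstep us x) \<subseteq> v.span (insert x (set us))"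
proof -
  have "set us \<subseteq> v.span (insert x (set us))" using v.span_superset by blast
  moreover have "sc c (proj us x) \<in> v.span (insert x (set us))" for c
    by (rule v.span_scale[OF proj_in_span])
  ultimately show ?thesis unfolding gstep_def by auto
qed

lemma gs_props: "onl us \<Longrightarrow> onl (gs us xs) \<and> (\<exists>ts. gs us xs = us @ ts)
   \<and> (\<forall>x\<in>set xs. \<exists>z\<in>v.span (set (gs us xs)). x - z \<in> J)
   \<and> set (gs us xs) \<subseteq> v.span (set us \<union> set xs)"
proof (induct xs arbitrary: us)
  case Nil thus ?case unfolding gs_def using v.span_superset by auto
next
  case (Cons x xs)
  let ?us' = "gstep us x"
  have on': "onl ?us'" using Cons(2) by (rule gstep_onl)
  note IH = Cons(1)[OF on']
  have gs_eq: "gs us (x # xs) = gs ?us' xs" unfolding gs_def by simp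
  obtain ts where ts: "?us' = us @ ts" using gstep_prefix by blast
  obtain ts' where ts': "gs ?us' xs = ?us' @ ts'" using IH by blast
  have mono: "v.span (set ?us') \<subseteq> v.span (set (gs ?us' xs))" using ts' by (intro v.span_mono) auto
  have A: "\<exists>ts. gs us (x # xs) = us @ ts" using ts ts' gs_eq by auto
  have B: "\<forall>y\<in>set (x # xs). \<exists>z\<in>v.span (set (gs us (x # xs))). y - z \<in> J"
  proof
    fix y assume "y \<in> set (x # xs)"
    then consider "y = x" | "y \<in> set xs" by auto
    thus "\<exists>z\<in>v.span (set (gs us (x # xs))). y - z \<in> J"
    proof cases
      case 1
      obtain z where "z \<in> v.span (set ?us')" "x - z \<in> J" using gstep_span by blast
      thus ?thesis using 1 mono gs_eq by auto
    next
      case 2 thus ?thesis using IH gs_eq by auto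
    qed
  qed
  have C: "set (gs us (x # xs)) \<subseteq> v.span (set us \<union> set (x # xs))"
  proof -
    have "set (gs ?us' xs) \<subseteq> v.span (set ?us' \<union> set xs)" using IH by blast
    also have "\<dots> \<subseteq> v.span (set us \<union> set (x # xs))"
    proof (rule v.span_minimal[OF _ v.subspace_span])
      have "set ?us' \<subseteq> v.span (insert x (set us))" by (rule gstep_sub)
      also have "\<dots> \<subseteq> v.span (set us \<union> set (x # xs))" by (rule v.span_mono) auto
      moreover have "set xs \<subseteq> v.span (set us \<union> set (x # xs))"
        using v.span_superset[of "set us \<union> set (x # xs)"] by auto
      ultimately show "set ?us' \<union> set xs \<subseteq> v.span (set us \<union> set (x # xs))" by blast
    qed
    finally show ?thesis using gs_eq by simp
  qed
  show ?case using IH A B C gs_eq by simp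
qed

lemma span_mod_subspace: "v.subspace {z. \<exists>w\<in>v.span S. z - w \<in> J}"
  unfolding v.subspace_def
proof (intro conjI allI impI ballI)
  show "0 \<in> {z. \<exists>w\<in>v.span S. z - w \<in> J}" using v.span_zero J_0 by force
next
  fix x y assume "x \<in> {z. \<exists>w\<in>v.span S. z - w \<in> J}" "y \<in> {z. \<exists>w\<in>v.span S. z - w \<in> J}"
  then obtain w1 w2 where w: "w1 \<in> v.span S" "x - w1 \<in> J" "w2 \<in> v.span S" "y - w2 \<in> J" by auto
  have e: "(x + y) - (w1 + w2) = (x - w1) + (y - w2)" by (simp add: algebra_simps)
  have "(x - w1) + (y - w2) \<in> J" using J_add w(2) w(4) by blast
  hence "(x + y) - (w1 + w2) \<in> J" by (simp only: e)
  thus "x + y \<in> {z. \<exists>w\<in>v.span S. z - w \<in> J}" using v.span_add w by blast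
next
  fix c x assume "x \<in> {z. \<exists>w\<in>v.span S. z - w \<in> J}"
  then obtain w where w: "w \<in> v.span S" "x - w \<in> J" by auto
  have "sc c x - sc c w = sc c (x - w)" by (simp add: v.scale_right_diff_distrib)
  hence "sc c x - sc c w \<in> J" using J_sc w by simp
  thus "sc c x \<in> {z. \<exists>w\<in>v.span S. z - w \<in> J}" using v.span_scale w by blast
qed

lemma exists_onb: "\<exists>us. onl us \<and> (\<forall>x. \<exists>z\<in>v.span (set us). x - z \<in> I) \<and> (\<forall>u\<in>set us. \<forall>i\<in>I. ip u i = 0)"
proof -
  obtain B1 where B1: "finite B1" "B1 \<subseteq> I" "\<forall>x\<in>I. \<exists>y\<in>v.span B1. x - y \<in> J" using IJ_fin by blast
  obtain B0 where B0: "finite B0" "\<forall>x. \<exists>y\<in>v.span B0. x - y \<in> I" using fc unfolding fin_codim_def by blast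
  obtain s where s: "set s = B1" using finite_list[OF B1(1)] by blast
  obtain b where b: "set b = B0" using finite_list[OF B0(1)] by blast
  have on0: "onl []" unfolding onl_def by simp
  define acc1 where "acc1 = gs [] s"
  from gs_props[OF on0, of s, folded acc1_def]
  have on1: "onl acc1" and sp1: "\<forall>x\<in>set s. \<exists>z\<in>v.span (set acc1). x - z \<in> J"
    and sub1: "set acc1 \<subseteq> v.span (set s)" by auto
  define acc where "acc = gs acc1 b"
  from gs_props[OF on1, of b, folded acc_def]
  obtain us where on2: "onl acc" and pre: "acc = acc1 @ us"
    and sp2: "\<forall>x\<in>set b. \<exists>z\<in>v.span (set acc). x - z \<in> J" by blast
  let ?l = "length acc1"
  have onus: "onl us"
    unfolding onl_def
  proof (intro allI impI)
    fix i j assume i: "i < length us" and j: "j < length us"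
    have L: "?l + i < length acc" "?l + j < length acc" using i j pre by auto
    have "ip (acc ! (?l + i)) (acc ! (?l + j)) = (if ?l + i = ?l + j then 1 else 0)"
      using on2 L unfolding onl_def by blast
    thus "ip (us ! i) (us ! j) = (if i = j then 1 else 0)" using pre by (simp add: nth_append)
  qed
  have orth: "ip u w = 0" if u: "u \<in> set us" and w: "w \<in> set acc1" for u w
  proof -
    obtain i where i: "i < length us" "u = us ! i" using u by (auto simp: in_set_conv_nth)
    obtain j where j: "j < ?l" "w = acc1 ! j" using w by (auto simp: in_set_conv_nth)
    have L: "?l + i < length acc" "j < length acc" using i j pre by auto
    have "ip (acc ! (?l + i)) (acc ! j) = (if ?l + i = j then 1 else 0)"
      using on2 L unfolding onl_def by blast
    thus ?thesis using i j pre by (simp add: nth_append)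
  qed
  have spacc1_I: "v.span (set acc1) \<subseteq> I"
  proof -
    have "v.span (set acc1) \<subseteq> v.span (set s)" using sub1 v.span_minimal v.subspace_span by blast
    also have "\<dots> \<subseteq> I" using s B1(2) subI by (intro v.span_minimal) auto
    finally show ?thesis .
  qed
  let ?V1 = "{z. \<exists>w\<in>v.span (set acc1). z - w \<in> J}"
  have spsV1: "v.span (set s) \<subseteq> ?V1"
    using sp1 by (intro v.span_minimal[OF _ span_mod_subspace]) auto
  have b_ok: "\<forall>u\<in>set us. \<forall>i\<in>I. ip u i = 0"
  proof (intro ballI)
    fix u i assume u: "u \<in> set us" and i: "i \<in> I"
    obtain y where y: "y \<in> v.span B1" "i - y \<in> J" using B1(3) i by blast
    obtain w where w: "w \<in> v.span (set acc1)" "y - w \<in> J" using spsV1 y(1) s by auto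
    have "i = (i - y) + (y - w) + w" by simp
    hence "ip u i = ip u (i - y) + ip u (y - w) + ip u w" by (metis ip_add_right)
    moreover have "ip u (i - y) = 0" "ip u (y - w) = 0" using y w ip_J_right by auto
    moreover have "ip u w = 0" using ip_orth_span[of "set acc1" u w] orth[OF u] w(1) by blast
    ultimately show "ip u i = 0" by simp
  qed
  let ?V = "{z. \<exists>w\<in>v.span (set acc). z - w \<in> J}"
  have spbV: "v.span (set b) \<subseteq> ?V"
    using sp2 by (intro v.span_minimal[OF _ span_mod_subspace]) auto
  have a_ok: "\<forall>x. \<exists>z\<in>v.span (set us). x - z \<in> I"
  proof
    fix x
    obtain y where y: "y \<in> v.span B0" "x - y \<in> I" using B0(2) by blast
    obtain w where w: "w \<in> v.span (set acc)" "y - w \<in> J" using spbV y(1) b by auto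
    have "w \<in> v.span (set acc1 \<union> set us)" using w(1) pre by simp
    then obtain w1 w2 where ww: "w = w1 + w2" "w1 \<in> v.span (set acc1)" "w2 \<in> v.span (set us)"
      unfolding v.span_Un by blast
    have e: "x - w2 = (x - y) + (y - w) + w1" using ww(1) by (simp add: algebra_simps)
    have "w1 \<in> I" using ww(2) spacc1_I by blast
    moreover have "y - w \<in> I" using w(2) J_sub_I by blast
    ultimately have "(x - y) + (y - w) + w1 \<in> I" using y(2) I_add by blast
    hence "x - w2 \<in> I" by (simp only: e)
    thus "\<exists>z\<in>v.span (set us). x - z \<in> I" using ww(3) by blast
  qed
  show ?thesis using onus a_ok b_ok by blast
qed

end

context rlit begin

definition usI :: "'a list" where
  "usI = (SOME us. onl us \<and> (\<forall>x. \<exists>z\<in>v.span (set us). x - z \<in> I) \<and> (\<forall>u\<in>set us. \<forall>i\<in>I. ip u i = 0))"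

lemma usI: "onl usI" "\<forall>x. \<exists>z\<in>v.span (set usI). x - z \<in> I" "\<forall>u\<in>set usI. \<forall>i\<in>I. ip u i = 0"
proof -
  have "onl usI \<and> (\<forall>x. \<exists>z\<in>v.span (set usI). x - z \<in> I) \<and> (\<forall>u\<in>set usI. \<forall>i\<in>I. ip u i = 0)"
    unfolding usI_def by (rule someI_ex) (rule exists_onb)
  thus "onl usI" "\<forall>x. \<exists>z\<in>v.span (set usI). x - z \<in> I" "\<forall>u\<in>set usI. \<forall>i\<in>I. ip u i = 0" by auto
qed

abbreviation "nU \<equiv> length usI"

lemma ip_I_right: "i \<in> I \<Longrightarrow> k < nU \<Longrightarrow> ip (usI ! k) i = 0"
  using usI(3) by auto

lemma ip_I_left: "i \<in> I \<Longrightarrow> k < nU \<Longrightarrow> ip i (usI ! k) = 0"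
  using ip_I_right ip_conj by (metis conjugate_zero)

lemma EXP: "x - (\<Sum>k<nU. sc (ip x (usI ! k)) (usI ! k)) \<in> I"
proof -
  define r where "r = x - (\<Sum>k<nU. sc (ip x (usI ! k)) (usI ! k))"
  have rp: "r = proj usI x" unfolding r_def proj_def by simp
  have ru: "ip r (usI ! j) = 0" if "j < nU" for j unfolding rp by (rule ip_proj[OF usI(1) that])
  obtain z where z: "z \<in> v.span (set usI)" "r - z \<in> I" using usI(2) by blast
  have zu: "ip z w = 0" if wU: "w \<in> set usI" for w
  proof -
    obtain j where j: "j < nU" "w = usI ! j" using wU by (auto simp: in_set_conv_nth)
    have "ip z w = ip r w - ip (r - z) w" by (simp add: ip_diff_left)
    also have "\<dots> = 0" using ru[OF j(1)] ip_I_left[OF z(2) j(1)] j(2) by simp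
    finally show ?thesis .
  qed
  have "ip z z = 0" by (rule ip_orth_span[of "set usI" z z]) (use zu z(1) in auto)
  hence "z \<in> J" by (rule ip_self_zero)
  hence "z \<in> I" by (rule J_sub_I)
  hence "(r - z) + z \<in> I" using z(2) I_add by blast
  thus ?thesis unfolding r_def by simp
qed

lemma KEY: assumes i: "i < nU"
  shows "ip (a * x) (usI ! i) = (\<Sum>k<nU. ip x (usI ! k) * ip (a * usI ! k) (usI ! i))"
proof -
  define S where "S = (\<Sum>k<nU. sc (ip x (usI ! k)) (usI ! k))"
  have "a * (x - S) \<in> I" unfolding S_def by (rule I_mult[OF EXP])
  hence 0: "ip (a * (x - S)) (usI ! i) = 0" using ip_I_left i by blast
  have "a * x = a * (x - S) + a * S" by (simp add: algebra_simps)
  hence "ip (a * x) (usI ! i) = ip (a * S) (usI ! i)" using 0 by (simp add: ip_add_left)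
  also have "\<dots> = (\<Sum>k<nU. ip x (usI ! k) * ip (a * usI ! k) (usI ! i))"
    unfolding S_def by (simp add: sum_distrib_left sc_mult_right ip_sum_left ip_sc_left)
  finally show ?thesis .
qed

definition rho :: "'a \<Rightarrow> 'k mat" where
  "rho a = mat nU nU (\<lambda>(i,j). ip (a * usI ! j) (usI ! i))"

lemma rho_carrier: "rho a \<in> carrier_mat nU nU" unfolding rho_def by simp
lemma dim_rho[simp]: "dim_row (rho a) = nU" "dim_col (rho a) = nU" unfolding rho_def by simp_all

lemma rho_one: "rho 1 = 1\<^sub>m nU"
  using usI(1) unfolding onl_def by (intro eq_matI) (auto simp: rho_def)

lemma rho_add: "rho (a + b) = rho a + rho b"
  by (intro eq_matI) (auto simp: rho_def distrib_right ip_add_left)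

lemma rho_sc: "rho (sc c a) = c \<cdot>\<^sub>m rho a"
  by (intro eq_matI) (auto simp: rho_def sc_mult_left ip_sc_left)

lemma rho_mult: "rho (a * b) = rho a * rho b"
proof (rule eq_matI)
  fix i j assume "i < dim_row (rho a * rho b)" "j < dim_col (rho a * rho b)"
  hence ij: "i < nU" "j < nU" by auto
  have "(rho a * rho b) $$ (i,j) = (\<Sum>k<nU. ip (a * usI ! k) (usI ! i) * ip (b * usI ! j) (usI ! k))"
    using ij by (simp add: rho_def scalar_prod_def atLeast0LessThan)
  also have "\<dots> = ip (a * (b * usI ! j)) (usI ! i)" using KEY[OF ij(1), of a "b * usI ! j"]
    by (simp add: mult.commute)
  also have "\<dots> = rho (a * b) $$ (i,j)" using ij by (simp add: rho_def mult.assoc)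
  finally show "rho (a * b) $$ (i, j) = (rho a * rho b) $$ (i, j)" by simp
qed auto

lemma rho_st: "rho (st a) = adjoint_mat (rho a)"
proof (rule eq_matI)
  fix i j assume "i < dim_row (adjoint_mat (rho a))" "j < dim_col (adjoint_mat (rho a))"
  hence ij: "i < nU" "j < nU" by (auto simp: adjoint_mat_def)
  have "rho (st a) $$ (i,j) = ip (usI ! j) (a * usI ! i)" using ij by (simp add: rho_def ip_adj)
  also have "\<dots> = conjugate (ip (a * usI ! i) (usI ! j))" by (rule ip_conj)
  also have "\<dots> = adjoint_mat (rho a) $$ (i,j)" using ij by (simp add: adjoint_mat_def rho_def)
  finally show "rho (st a) $$ (i, j) = adjoint_mat (rho a) $$ (i, j)" .
qed (auto simp: adjoint_mat_def)

lemma rho_star_rep: "star_rep sc st nU rho"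
  unfolding star_rep_def using rho_carrier rho_one rho_add rho_mult rho_sc rho_st by blast

lemma rho_soft: "I_soft rho = hat I"
  unfolding set_eq_iff I_soft_def mem_Collect_eq
proof (intro allI iffI)
  fix p assume "det (rho p) = 0"
  then obtain c where c: "c \<in> carrier_vec nU" "c \<noteq> 0\<^sub>v nU" "rho p *\<^sub>v c = 0\<^sub>v nU"
    using det_0_iff_vec_prod_zero[OF rho_carrier] by blast
  define x where "x = (\<Sum>k<nU. sc (c $ k) (usI ! k))"
  have xc: "ip x (usI ! j) = c $ j" if "j < nU" for j
    unfolding x_def by (rule ip_lincomb[OF usI(1) that])
  have xI: "x \<notin> I"
  proof
    assume "x \<in> I"
    hence "c $ j = 0" if "j < nU" for j using xc[OF that] ip_I_left[OF _ that] by simp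
    hence "c = 0\<^sub>v nU" using c(1) by (intro eq_vecI) auto
    thus False using c(2) by simp
  qed
  have px: "ip (p * x) (usI ! i) = 0" if i: "i < nU" for i
  proof -
    have "ip (p * x) (usI ! i) = (\<Sum>k<nU. c $ k * ip (p * usI ! k) (usI ! i))"
      using KEY[OF i, of p x] xc by simp
    also have "\<dots> = (rho p *\<^sub>v c) $ i" using i c(1)
      by (simp add: rho_def scalar_prod_def atLeast0LessThan mult.commute)
    also have "\<dots> = 0" using c(3) i by simp
    finally show ?thesis .
  qed
  have "p * x - (\<Sum>k<nU. sc (ip (p * x) (usI ! k)) (usI ! k)) \<in> I" by (rule EXP)
  hence "p * x \<in> I" using px by simp
  thus "p \<in> hat I" using xI unfolding hat_def by blast
next
  fix p assume "p \<in> hat I"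
  then obtain q where q: "q \<notin> I" "p * q \<in> I" unfolding hat_def by blast
  define c where "c = vec nU (\<lambda>k. ip q (usI ! k))"
  have c0: "c \<noteq> 0\<^sub>v nU"
  proof
    assume "c = 0\<^sub>v nU"
    have "ip q (usI ! k) = 0" if kU: "k < nU" for k
    proof -
      have "c $ k = 0" using \<open>c = 0\<^sub>v nU\<close> kU by simp
      thus ?thesis unfolding c_def using kU by simp
    qed
    hence "q - (\<Sum>k<nU. sc (ip q (usI ! k)) (usI ! k)) = q" by simp
    thus False using EXP[of q] q(1) by simp
  qed
  have "rho p *\<^sub>v c = 0\<^sub>v nU"
  proof (rule eq_vecI)
    fix i assume "i < dim_vec (0\<^sub>v nU :: 'k vec)"
    hence i: "i < nU" by simp
    have "(rho p *\<^sub>v c) $ i = (\<Sum>k<nU. ip q (usI ! k) * ip (p * usI ! k) (usI ! i))"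
      using i by (simp add: rho_def c_def scalar_prod_def atLeast0LessThan mult.commute)
    also have "\<dots> = ip (p * q) (usI ! i)" by (rule KEY[OF i, of p q, symmetric])
    also have "\<dots> = 0" using ip_I_left[OF q(2) i] .
    finally show "(rho p *\<^sub>v c) $ i = 0\<^sub>v nU $ i" using i by simp
  qed simp
  moreover have "c \<in> carrier_vec nU" unfolding c_def by simp
  ultimately show "det (rho p) = 0" using c0 det_0_iff_vec_prod_zero[OF rho_carrier] by blast
qed

lemma exists_rep: "\<exists>n \<pi>. star_rep sc st n \<pi> \<and> I_soft \<pi> = hat I"
  by (intro exI[of _ nU] exI[of _ rho] conjI rho_star_rep rho_soft)

end

definition bsum :: "('a \<Rightarrow> 'k::rclike mat) \<Rightarrow> nat \<Rightarrow> ('a \<Rightarrow> 'k mat) \<Rightarrow> nat \<Rightarrow> 'a \<Rightarrow> 'k mat" where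
  "bsum p1 n1 p2 n2 a = four_block_mat (p1 a) (0\<^sub>m n1 n2) (0\<^sub>m n2 n1) (p2 a)"

context salg begin

lemma star_rep_bsum:
  assumes r1: "star_rep sc st n1 p1" and r2: "star_rep sc st n2 p2"
  shows "star_rep sc st (n1 + n2) (bsum p1 n1 p2 n2) \<and> I_soft (bsum p1 n1 p2 n2) = I_soft p1 \<union> I_soft p2"
proof -
  have c1: "\<And>a. p1 a \<in> carrier_mat n1 n1" using r1 unfolding star_rep_def by blast
  have c2: "\<And>a. p2 a \<in> carrier_mat n2 n2" using r2 unfolding star_rep_def by blast
  have one1: "p1 1 = 1\<^sub>m n1" and one2: "p2 1 = 1\<^sub>m n2" using r1 r2 unfolding star_rep_def by blast+
  have add1: "\<And>a b. p1 (a + b) = p1 a + p1 b" and add2: "\<And>a b. p2 (a + b) = p2 a + p2 b"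
    using r1 r2 unfolding star_rep_def by blast+
  have mul1: "\<And>a b. p1 (a * b) = p1 a * p1 b" and mul2: "\<And>a b. p2 (a * b) = p2 a * p2 b"
    using r1 r2 unfolding star_rep_def by blast+
  have sc1: "\<And>c a. p1 (sc c a) = c \<cdot>\<^sub>m p1 a" and sc2: "\<And>c a. p2 (sc c a) = c \<cdot>\<^sub>m p2 a"
    using r1 r2 unfolding star_rep_def by blast+
  have st1: "\<And>a. p1 (st a) = adjoint_mat (p1 a)" and st2: "\<And>a. p2 (st a) = adjoint_mat (p2 a)"
    using r1 r2 unfolding star_rep_def by blast+
  let ?p = "bsum p1 n1 p2 n2"
  have car: "?p a \<in> carrier_mat (n1 + n2) (n1 + n2)" for a
    unfolding bsum_def using c1 c2 by (intro four_block_carrier_mat) auto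
  have dims: "dim_row (?p x) = n1 + n2" "dim_col (?p x) = n1 + n2" for x
    unfolding bsum_def using c1[of x] c2[of x] by auto
  have "?p 1 = 1\<^sub>m (n1 + n2)" unfolding bsum_def one1 one2 by simp
  moreover have "?p (a + b) = ?p a + ?p b" for a b
    unfolding bsum_def add1 add2
    by (subst add_four_block_mat[OF c1 zero_carrier_mat zero_carrier_mat c2 c1 zero_carrier_mat zero_carrier_mat c2])
      simp
  moreover have "?p (a * b) = ?p a * ?p b" for a b
  proof -
    have m1: "p1 a * p1 b \<in> carrier_mat n1 n1" and m2: "p2 a * p2 b \<in> carrier_mat n2 n2"
      using c1 c2 by (auto intro: mult_carrier_mat)
    show ?thesis unfolding bsum_def mul1 mul2
      by (subst mult_four_block_mat[OF c1 zero_carrier_mat zero_carrier_mat c2 c1 zero_carrier_mat zero_carrier_mat c2])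
        (simp add: right_mult_zero_mat[OF c1] left_mult_zero_mat[OF c2] left_mult_zero_mat[OF c1]
          right_mult_zero_mat[OF c2] right_add_zero_mat[OF m1] left_add_zero_mat[OF m2])
  qed
  moreover have "?p (sc c a) = c \<cdot>\<^sub>m ?p a" for c a
    unfolding bsum_def sc1 sc2
    by (subst smult_four_block_mat[OF c1 zero_carrier_mat zero_carrier_mat c2]) simp
  moreover have "?p (st a) = adjoint_mat (?p a)" for a
  proof (rule eq_matI)
    fix i j assume "i < dim_row (adjoint_mat (?p a))" "j < dim_col (adjoint_mat (?p a))"
    hence ij: "i < n1 + n2" "j < n1 + n2" by (simp_all add: dims adjoint_mat_def)
    show "?p (st a) $$ (i, j) = adjoint_mat (?p a) $$ (i, j)"
      unfolding bsum_def st1 st2 using ij c1[of a] c2[of a]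
      by (auto simp: adjoint_mat_def)
  qed (simp_all add: dims adjoint_mat_def)
  ultimately have sr: "star_rep sc st (n1 + n2) ?p" unfolding star_rep_def using car by blast
  have "det (?p a) = det (p1 a) * det (p2 a)" for a
    unfolding bsum_def by (rule det_four_block_mat_lower_left_zero[OF c1 _ refl c2]) simp
  hence "I_soft ?p = I_soft p1 \<union> I_soft p2" unfolding I_soft_def by auto
  thus ?thesis using sr by blast
qed

lemma mat00: "(A :: 'k mat) \<in> carrier_mat 0 0 \<Longrightarrow> B \<in> carrier_mat 0 0 \<Longrightarrow> A = B"
  by (rule eq_matI) auto

lemma star_rep_zero: "star_rep sc st 0 (\<lambda>a. 1\<^sub>m 0) \<and> I_soft (\<lambda>a. (1\<^sub>m 0 :: 'k mat)) = {}"
proof -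
  have z: "(1\<^sub>m 0 :: 'k mat) \<in> carrier_mat 0 0" by simp
  have "(1\<^sub>m 0 :: 'k mat) = 1\<^sub>m 0 + 1\<^sub>m 0" by (rule mat00) auto
  moreover have "(1\<^sub>m 0 :: 'k mat) = 1\<^sub>m 0 * 1\<^sub>m 0" by (rule mat00) auto
  moreover have "(1\<^sub>m 0 :: 'k mat) = c \<cdot>\<^sub>m 1\<^sub>m 0" for c by (rule mat00) auto
  moreover have "(1\<^sub>m 0 :: 'k mat) = adjoint_mat (1\<^sub>m 0)" by (rule mat00) (auto simp: adjoint_mat_def)
  ultimately have "star_rep sc st 0 (\<lambda>a. 1\<^sub>m 0)" unfolding star_rep_def using z by blast
  moreover have "I_soft (\<lambda>a. (1\<^sub>m 0 :: 'k mat)) = {}" unfolding I_soft_def by simp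
  ultimately show ?thesis by blast
qed

end

locale srep = salg sc st for sc :: "'k::rclike \<Rightarrow> 'a::ring_1 \<Rightarrow> 'a" and st +
  fixes n :: nat and \<pi> :: "'a \<Rightarrow> 'k mat"
  assumes sr: "star_rep sc st n \<pi>"
begin

lemma pc: "\<pi> a \<in> carrier_mat n n" using sr unfolding star_rep_def by blast
lemma p1: "\<pi> 1 = 1\<^sub>m n" using sr unfolding star_rep_def by blast
lemma padd: "\<pi> (a + b) = \<pi> a + \<pi> b" using sr unfolding star_rep_def by blast
lemma pmul: "\<pi> (a * b) = \<pi> a * \<pi> b" using sr unfolding star_rep_def by blast
lemma psc: "\<pi> (sc c a) = c \<cdot>\<^sub>m \<pi> a" using sr unfolding star_rep_def by blast
lemma pst: "\<pi> (st a) = adjoint_mat (\<pi> a)" using sr unfolding star_rep_def by blast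
lemma dim_p[simp]: "dim_row (\<pi> a) = n" "dim_col (\<pi> a) = n" using pc[of a] by auto

definition ent :: "nat \<Rightarrow> nat \<Rightarrow> 'a \<Rightarrow> 'k" where "ent i j a = \<pi> a $$ (i,j)"

lemma ent_lin: "i < n \<Longrightarrow> j < n \<Longrightarrow> linf (ent i j)"
  unfolding linf_def ent_def by (simp add: padd psc)

lemma ent_0: "i < n \<Longrightarrow> j < n \<Longrightarrow> ent i j 0 = 0"
proof -
  assume ij: "i < n" "j < n"
  have "ent i j 0 = ent i j (sc 0 0)" by simp
  also have "\<dots> = 0" using ent_lin[OF ij] by (simp only: linf_sc) simp
  finally show ?thesis .
qed

lemma ent_eq: "(\<forall>i<n. \<forall>j<n. ent i j a = ent i j b) \<Longrightarrow> \<pi> a = \<pi> b"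
  unfolding ent_def by (intro eq_matI) auto

definition K :: "'a set" where "K = {a. \<pi> a = 0\<^sub>m n n}"

lemma K_ent: "a \<in> K \<longleftrightarrow> (\<forall>i<n. \<forall>j<n. ent i j a = 0)"
  unfolding K_def ent_def by (auto intro!: eq_matI)

lemma K_diff: "x - y \<in> K \<longleftrightarrow> (\<forall>i<n. \<forall>j<n. ent i j x = ent i j y)"
  unfolding K_ent using ent_lin by (simp add: linf_diff)

lemma K_left_ideal: "left_ideal K"
  unfolding left_ideal_def
proof (intro conjI ballI allI)
  show "0 \<in> K" unfolding K_ent using ent_0 by blast
  fix x y assume "x \<in> K" "y \<in> K" thus "x + y \<in> K" unfolding K_ent using ent_lin by (simp add: linf_add)
next
  fix a x assume "x \<in> K" thus "a * x \<in> K" unfolding K_def by (simp add: pmul right_mult_zero_mat[OF pc])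
qed

lemma ent_sum_list: "i < n \<Longrightarrow> j < n \<Longrightarrow> ent i j (\<Sum>a\<leftarrow>as. f a) = (\<Sum>a\<leftarrow>as. ent i j (f a))"
  by (induct as) (simp_all add: ent_0 linf_add[OF ent_lin])

definition gj :: "nat \<Rightarrow> 'a \<Rightarrow> real" where "gj j a = (\<Sum>i<n. (norm (\<pi> a $$ (i,j)))^2)"

lemma ent_sq: "j < n \<Longrightarrow> ent j j (st a * a) = of_real (gj j a)"
proof -
  assume j: "j < n"
  have "ent j j (st a * a) = (\<Sum>i<n. conjugate (\<pi> a $$ (i,j)) * \<pi> a $$ (i,j))"
    unfolding ent_def pmul pst using j by (simp add: adjoint_mat_def scalar_prod_def atLeast0LessThan)
  also have "\<dots> = of_real (gj j a)" unfolding gj_def by (simp add: conjugate_mult_self)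
  finally show ?thesis .
qed

lemma K_real: "real_left_ideal st K"
  unfolding real_left_ideal_def
proof (intro conjI allI impI)
  show "left_ideal K" by (rule K_left_ideal)
  fix as :: "'a list"
  assume "(\<Sum>a\<leftarrow>as. st a * a) \<in> {x + st y |x y. x \<in> K \<and> y \<in> K}"
  then obtain x y where xy: "(\<Sum>a\<leftarrow>as. st a * a) = x + st y" "x \<in> K" "y \<in> K" by blast
  have zero_j: "sum_list (map (gj j) as) = 0" if j: "j < n" for j
  proof -
    have "ent j j (\<Sum>a\<leftarrow>as. st a * a) = (\<Sum>a\<leftarrow>as. of_real (gj j a))"
      by (subst ent_sum_list[OF j j]) (simp add: ent_sq[OF j])
    also have "\<dots> = of_real (sum_list (map (gj j) as))" by (induct as) simp_all
    finally have 1: "ent j j (\<Sum>a\<leftarrow>as. st a * a) = of_real (sum_list (map (gj j) as))" .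
    have "ent j j (x + st y) = ent j j x + ent j j (st y)" using linf_add[OF ent_lin[OF j j]] by simp
    also have "ent j j x = 0" using xy(2) j K_ent by blast
    also have "ent j j (st y) = conjugate (ent j j y)" unfolding ent_def pst using j by (simp add: adjoint_mat_def)
    also have "ent j j y = 0" using xy(3) j K_ent by blast
    finally have "ent j j (x + st y) = 0" by simp
    thus ?thesis using 1 xy(1) by simp
  qed
  show "set as \<subseteq> K"
  proof
    fix a assume a: "a \<in> set as"
    show "a \<in> K" unfolding K_ent ent_def
    proof (intro allI impI)
      fix i j assume ij: "i < n" "j < n"
      have nn: "\<And>b. 0 \<le> gj j b" unfolding gj_def by (intro sum_nonneg) simp
      have "\<forall>x\<in>set (map (gj j) as). x = 0"
        using zero_j[OF ij(2)] sum_list_nonneg_eq_0_iff[of "map (gj j) as"] nn by auto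
      hence "gj j a = 0" using a by simp
      hence "(\<forall>i\<in>{..<n}. (norm (\<pi> a $$ (i,j)))^2 = 0)" unfolding gj_def
        by (subst sum_nonneg_eq_0_iff[symmetric]) auto
      thus "\<pi> a $$ (i, j) = 0" using ij by simp
    qed
  qed
qed

definition fsK :: "('a \<Rightarrow> 'k) list" where
  "fsK = concat (map (\<lambda>i. map (\<lambda>j. ent i j) [0..<n]) [0..<n])"

lemma fsK_lin: "\<forall>f\<in>set fsK. linf f"
  unfolding fsK_def using ent_lin by auto

lemma fsK_mem: "i < n \<Longrightarrow> j < n \<Longrightarrow> ent i j \<in> set fsK"
proof -
  assume ij: "i < n" "j < n"
  have "ent i j \<in> set (map (\<lambda>j. ent i j) [0..<n])" using ij(2) by simp
  moreover have "map (\<lambda>j. ent i j) [0..<n] \<in> set (map (\<lambda>i. map (\<lambda>j. ent i j) [0..<n]) [0..<n])"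
    unfolding set_map set_upt using ij(1) by (intro imageI) simp
  ultimately show ?thesis unfolding fsK_def set_concat by blast
qed

lemma K_fin: "fin_codim sc K"
proof -
  obtain B where B: "finite B" "\<forall>x\<in>UNIV. \<exists>y\<in>v.span B. \<forall>f\<in>set fsK. f x = f y"
    using fk[OF v.subspace_UNIV fsK_lin] by blast
  have "\<forall>x. \<exists>y\<in>v.span B. x - y \<in> K"
  proof
    fix x obtain y where y: "y \<in> v.span B" "\<forall>f\<in>set fsK. f x = f y" using B(2) by blast
    have "x - y \<in> K" unfolding K_diff using y(2) fsK_mem by blast
    thus "\<exists>y\<in>v.span B. x - y \<in> K" using y(1) by blast
  qed
  thus ?thesis unfolding fin_codim_def using B(1) by blast
qed

lemma K_sub: "v.subspace K" using K_left_ideal by (rule left_ideal_subspace)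

definition bsK :: "'a list" where
  "bsK = (SOME bs. distinct bs \<and> (\<forall>x. \<exists>w\<in>carrier_vec (length bs). x - lc w bs \<in> K)
     \<and> (\<forall>w\<in>carrier_vec (length bs). lc w bs \<in> K \<longrightarrow> w = 0\<^sub>v (length bs)))"

lemma bsK: "distinct bsK \<and> (\<forall>x. \<exists>w\<in>carrier_vec (length bsK). x - lc w bsK \<in> K)
     \<and> (\<forall>w\<in>carrier_vec (length bsK). lc w bsK \<in> K \<longrightarrow> w = 0\<^sub>v (length bsK))"
proof -
  from K_fin obtain B where "finite B" "\<forall>x. \<exists>y\<in>v.span B. x - y \<in> K" unfolding fin_codim_def by blast
  from exists_basis[OF K_sub this] show ?thesis unfolding bsK_def by (rule someI_ex)
qed

sublocale kq: fcq_li sc st K bsK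
  by (unfold_locales) (insert bsK K_sub K_left_ideal, blast+)

lemma K_eq: "x - y \<in> K \<Longrightarrow> \<pi> x = \<pi> y"
  unfolding K_diff by (intro ent_eq) blast

lemma hat_K: "hat K = I_soft \<pi>"
  unfolding kq.hat_rep I_soft_def set_eq_iff mem_Collect_eq
proof (intro allI iffI)
  fix p assume "det (kq.rep p) = 0"
  hence "p \<in> hat K" unfolding kq.hat_rep by simp
  then obtain q where q: "q \<notin> K" "p * q \<in> K" unfolding hat_def by blast
  obtain i j where ij: "i < n" "j < n" "\<pi> q $$ (i,j) \<noteq> 0"
    using q(1) unfolding K_ent ent_def by blast
  define w where "w = col (\<pi> q) j"
  have w: "w \<in> carrier_vec n" "w \<noteq> 0\<^sub>v n" unfolding w_def using ij
    by (auto simp: col_def dest!: arg_cong[of _ _ "\<lambda>v. v $ i"])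
  have "\<pi> p *\<^sub>v w = col (\<pi> p * \<pi> q) j" unfolding w_def using ij pc
    by (simp add: col_mult2[OF pc pc ij(2)])
  also have "\<pi> p * \<pi> q = 0\<^sub>m n n" using q(2) unfolding K_def by (simp add: pmul)
  also have "col (0\<^sub>m n n) j = 0\<^sub>v n" using ij by (intro eq_vecI) auto
  finally show "det (\<pi> p) = 0" using w det_0_iff_vec_prod_zero[OF pc] by blast
next
  fix p assume dp: "det (\<pi> p) = 0"
  show "det (kq.rep p) = 0"
  proof (rule ccontr)
    assume "det (kq.rep p) \<noteq> 0"
    from det_non_zero_imp_unit[OF kq.rep_carrier this, of undefined]
    obtain B where B: "B \<in> carrier_mat kq.m kq.m" "kq.rep p * B = 1\<^sub>m kq.m"
      unfolding Units_def ring_mat_def by auto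
    define c where "c = B *\<^sub>v kq.co 1"
    have c: "c \<in> carrier_vec kq.m" unfolding c_def using B(1) by simp
    have "kq.rep p *\<^sub>v c = (kq.rep p * B) *\<^sub>v kq.co 1"
      unfolding c_def using B(1) by (simp add: assoc_mult_mat_vec[OF kq.rep_carrier B(1)])
    also have "\<dots> = kq.co 1" using B(2) by simp
    finally have "kq.co (p * lc c bsK) = kq.co 1" using kq.co_mult_lc[OF c] by simp
    hence "p * lc c bsK - 1 \<in> K" using kq.co_eq_iff by blast
    hence "\<pi> (p * lc c bsK) = \<pi> 1" by (rule K_eq)
    hence "\<pi> p * \<pi> (lc c bsK) = 1\<^sub>m n" by (simp add: pmul p1)
    hence "det (\<pi> p) * det (\<pi> (lc c bsK)) = 1"
      using det_mult[OF pc pc, of p "lc c bsK"] det_one by simp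
    thus False using dp by simp
  qed
qed

lemma srep_to_ideals: "real_left_ideal st K \<and> fin_codim sc K \<and> I_soft \<pi> = hat K"
  using K_real K_fin hat_K by simp

end

context salg begin

lemma main_equiv:
  assumes tg: "trace_good TYPE('k)"
  shows "(\<exists>n (\<pi> :: 'a \<Rightarrow> 'k mat). star_rep sc st n \<pi> \<and> S = I_soft \<pi>) \<longleftrightarrow>
         (\<exists>Is :: 'a set list. (\<forall>I\<in>set Is. real_left_ideal st I \<and> fin_codim sc I) \<and>
                S = (\<Union>I\<in>set Is. hat I))"
proof
  assume "\<exists>n (\<pi> :: 'a \<Rightarrow> 'k mat). star_rep sc st n \<pi> \<and> S = I_soft \<pi>"
  then obtain n and \<pi> :: "'a \<Rightarrow> 'k mat" where r: "star_rep sc st n \<pi>" and S: "S = I_soft \<pi>" by blast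
  have "srep sc st n \<pi>" unfolding srep_def srep_axioms_def using salg_axioms r by blast
  then interpret r: srep sc st n \<pi> .
  show "\<exists>Is :: 'a set list. (\<forall>I\<in>set Is. real_left_ideal st I \<and> fin_codim sc I) \<and> S = (\<Union>I\<in>set Is. hat I)"
    using r.srep_to_ideals S by (intro exI[of _ "[r.K]"]) simp
next
  assume "\<exists>Is :: 'a set list. (\<forall>I\<in>set Is. real_left_ideal st I \<and> fin_codim sc I) \<and> S = (\<Union>I\<in>set Is. hat I)"
  then obtain Is :: "'a set list" where Is: "\<forall>I\<in>set Is. real_left_ideal st I \<and> fin_codim sc I"
    and S: "S = (\<Union>I\<in>set Is. hat I)" by blast
  have "\<exists>n (\<pi> :: 'a \<Rightarrow> 'k mat). star_rep sc st n \<pi> \<and> I_soft \<pi> = (\<Union>I\<in>set Is. hat I)"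
    using Is
  proof (induct Is)
    case Nil
    show ?case using star_rep_zero by (intro exI[of _ 0] exI[of _ "\<lambda>a. 1\<^sub>m 0"]) simp
  next
    case (Cons I Is)
    from Cons obtain n2 and p2 :: "'a \<Rightarrow> 'k mat" where r2: "star_rep sc st n2 p2"
      and s2: "I_soft p2 = (\<Union>I\<in>set Is. hat I)" by auto
    have "rlit sc st I" unfolding rlit_def rlit_axioms_def rli_def rli_axioms_def
      using salg_axioms Cons(2) tg by auto
    then interpret ri: rlit sc st I .
    obtain n1 and p1 :: "'a \<Rightarrow> 'k mat" where r1: "star_rep sc st n1 p1" and s1: "I_soft p1 = hat I"
      using ri.exists_rep by blast
    from star_rep_bsum[OF r1 r2]
    show ?case using s1 s2 by (intro exI[of _ "n1 + n2"] exI[of _ "bsum p1 n1 p2 n2"]) auto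
  qed
  thus "\<exists>n (\<pi> :: 'a \<Rightarrow> 'k mat). star_rep sc st n \<pi> \<and> S = I_soft \<pi>" using S by metis
qed

end

theorem proposition6p1:
  shows "(\<forall>(sc :: real \<Rightarrow> 'a::ring_1 \<Rightarrow> 'a) st (S :: 'a set). star_algebra sc st \<longrightarrow>
            ((\<exists>n (\<pi> :: 'a \<Rightarrow> real mat). star_rep sc st n \<pi> \<and> S = I_soft \<pi>) \<longleftrightarrow>
             (\<exists>Is :: 'a set list. (\<forall>I\<in>set Is. real_left_ideal st I \<and> fin_codim sc I) \<and>
                S = (\<Union>I\<in>set Is. hat I))))
       \<and> (\<forall>(sc :: complex \<Rightarrow> 'b::ring_1 \<Rightarrow> 'b) st (S :: 'b set). star_algebra sc st \<longrightarrow>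
            ((\<exists>n (\<pi> :: 'b \<Rightarrow> complex mat). star_rep sc st n \<pi> \<and> S = I_soft \<pi>) \<longleftrightarrow>
             (\<exists>Is :: 'b set list. (\<forall>I\<in>set Is. real_left_ideal st I \<and> fin_codim sc I) \<and>
                S = (\<Union>I\<in>set Is. hat I))))"
proof (intro conjI allI impI)
  fix sc :: "real \<Rightarrow> 'a::ring_1 \<Rightarrow> 'a" and st and S :: "'a set"
  assume "star_algebra sc st"
  hence "salg sc st" unfolding salg_def .
  thus "(\<exists>n (\<pi> :: 'a \<Rightarrow> real mat). star_rep sc st n \<pi> \<and> S = I_soft \<pi>) \<longleftrightarrow>
             (\<exists>Is :: 'a set list. (\<forall>I\<in>set Is. real_left_ideal st I \<and> fin_codim sc I) \<and>
                S = (\<Union>I\<in>set Is. hat I))"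
    by (rule salg.main_equiv[OF _ trace_good_real])
next
  fix sc :: "complex \<Rightarrow> 'b::ring_1 \<Rightarrow> 'b" and st and S :: "'b set"
  assume "star_algebra sc st"
  hence "salg sc st" unfolding salg_def .
  thus "(\<exists>n (\<pi> :: 'b \<Rightarrow> complex mat). star_rep sc st n \<pi> \<and> S = I_soft \<pi>) \<longleftrightarrow>
             (\<exists>Is :: 'b set list. (\<forall>I\<in>set Is. real_left_ideal st I \<and> fin_codim sc I) \<and>
                S = (\<Union>I\<in>set Is. hat I))"
    by (rule salg.main_equiv[OF _ trace_good_complex])
qed

end
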